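(* Let $u\in\mathbb C^\times$ and let $W(u)$ be the vector superspace with basis $[u]^j$, $j\in\mathbb Z$, where $[u]^j$ has parity $(1-s_j)/2$. Then the following formulas define on $W(u)$ the structure of an irreducible tame $\mathcal E_{\mathbf s}$-module of level zero: for $i\in\hat I$, $j\in\mathbb Z$, $$E_i(z)[u]^j=\begin{cases}\delta(q_3^{\bar j}u/z)[u]^{j+1},& i\equiv j\pmod N,\\0,&\text{otherwise},\end{cases}\qquad F_i(z)[u]^{j+1}=\begin{cases}s_{j+1}\,\delta(q_3^{\bar j}u/z)[u]^{j},& i\equiv j\pmod N,\\0,&\text{otherwise},\end{cases}$$ $$K_i^\pm(z)[u]^j=\begin{cases}\psi_{-s_j}(q_3^{\bar j}u/z)[u]^j,& i\equiv j\pmod N,\\ \psi_{s_j}(q_3^{\overline{j-1}}u/z)[u]^j,& i\equiv j-1\pmod N,\\ [u]^j,&\text{otherwise}.\end{cases}$$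
   Context: Fix integers $m,n\ge0$, $m\ne n$, $N=m+n\ge3$, a parity sequence $\mathbf s=(s_1,\dots,s_N)\in\{1,-1\}^N$ with exactly $m$ entries $1$, extended by $s_{i+N}=s_i$; $\hat I=\{0,\dots,N-1\}$ (indices mod $N$), $|i|=(1-s_is_{i+1})/2$, $A_{i,j}=(s_i+s_{i+1})\delta_{i,j}-s_i\delta_{i,j+1}-s_j\delta_{i+1,j}$, $M_{i+1,i}=-M_{i,i+1}=s_{i+1}$ and $M_{i,j}=0$ if $i\ne j\pm1$. Let $\hat Q$ be free abelian on $\alpha_i$ with $\langle\alpha_i,\alpha_j\rangle=A_{i,j}$. Fix $d,q\in\mathbb C^\times$, $q_1=dq^{-1}$, $q_2=q^2$, $q_3=d^{-1}q^{-1}$, with $q_1^aq_2^bq_3^c=1$ only if $a=b=c$. $\delta(z)=\sum_{n\in\mathbb Z}z^n$. $\mathcal E_{\mathbf s}$ is the unital associative superalgebra generated by $E_{i,r},F_{i,r},H_{i,r'}$, invertible $K_i$ ($i\in\hat I$, $r,r'\in\mathbb Z$, $r'\ne0$), $|E_{i,r}|=|F_{i,r}|=|i|$, others even; $E_i(z)=\sum_kE_{i,k}z^{-k}$, $F_i(z)=\sum_kF_{i,k}z^{-k}$, $K_i^\pm(z)=K_i^{\pm1}\exp(\pm(q-q^{-1})\sum_{r>0}H_{i,\pm r}z^{\mp r})$; $[X,Y]=XY-(-1)^{|X||Y|}YX$ and $[\![X,Y]\!]=XY-(-1)^{|X||Y|}q^{\langle\alpha,\beta\rangle}YX$ for $X,Y$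 of weights $\alpha,\beta$ ($E_{i,r}$ weight $\alpha_i$, $F_{i,r}$ weight $-\alpha_i$, $K_i,H_{i,r}$ weight 0). Relations, for all $i,j\in\hat I$: (1) $K_iK_j=K_jK_i$, $K_iE_j(z)K_i^{-1}=q^{A_{i,j}}E_j(z)$, $K_iF_j(z)K_i^{-1}=q^{-A_{i,j}}F_j(z)$; (2) $K_i^\pm(z)K_j^\pm(w)=K_j^\pm(w)K_i^\pm(z)$, $K_i^-(z)K_j^+(w)=K_j^+(w)K_i^-(z)$; (3) $(d^{M_{i,j}}z-q^{A_{i,j}}w)K_i^\pm(z)E_j(w)=(d^{M_{i,j}}q^{A_{i,j}}z-w)E_j(w)K_i^\pm(z)$, $(d^{M_{i,j}}z-q^{-A_{i,j}}w)K_i^\pm(z)F_j(w)=(d^{M_{i,j}}q^{-A_{i,j}}z-w)F_j(w)K_i^\pm(z)$; (4) $[E_i(z),F_j(w)]=\frac{\delta_{i,j}}{q-q^{-1}}(\delta(w/z)K_i^+(w)-\delta(z/w)K_i^-(z))$; (5) if $A_{i,j}=0$: $[E_i(z),E_j(w)]=0=[F_i(z),F_j(w)]$; if $A_{i,j}\neq0$: $(d^{M_{i,j}}z-q^{A_{i,j}}w)E_i(z)E_j(w)=(-1)^{|i||j|}(d^{M_{i,j}}q^{A_{i,j}}z-w)E_j(w)E_i(z)$ and $(d^{M_{i,j}}z-q^{-A_{i,j}}w)F_i(z)F_j(w)=(-1)^{|i||j|}(d^{M_{i,j}}q^{-A_{i,j}}z-w)F_j(w)F_i(z)$; (6) if $A_{i,i}\ne0$: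 $\mathrm{Sym}_{z_1,z_2}[\![E_i(z_1),[\![E_i(z_2),E_{i\pm1}(w)]\!]]\!]=0$, same for $F$; if $mn\ne2$, $A_{i,i}=0$: $\mathrm{Sym}_{z_1,z_2}[\![E_i(z_1),[\![E_{i+1}(w_1),[\![E_i(z_2),E_{i-1}(w_2)]\!]]\!]]\!]=0$, same for $F$; if $mn=2$, $A_{i,i}\ne0$: $\mathrm{Sym}_{z_1,z_2}\mathrm{Sym}_{w_1,w_2}[\![E_{i-1}(z_1),[\![E_{i+1}(w_1),[\![E_{i-1}(z_2),[\![E_{i+1}(w_2),E_i(y)]\!]]\!]]\!]]\!]=\mathrm{Sym}_{z_1,z_2}\mathrm{Sym}_{w_1,w_2}[\![E_{i+1}(w_1),[\![E_{i-1}(z_1),[\![E_{i+1}(w_2),[\![E_{i-1}(z_2),E_i(y)]\!]]\!]]\!]]\!]$, same for $F$. Notation: $\bar j$ for $j\in\mathbb Z$ is defined by $\bar0=0$, $\overline{j+1}=\bar j+s_{j+1}$. $\psi_k(z)=\frac{q^k-q^{-k}z}{1-z}$; eigenvalues of $K_i^+(z)$ (resp. $K_i^-(z)$) are expansions in $z^{-1}$ (resp. $z$). Tame: there is a basis of common eigenvectors of all $K_i^\pm(z)$ and all joint eigenspaces are one-dimensional. Level zero: $K=K_0\cdots K_{N-1}$ acts by $1$. *)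

theory Defs
  imports Complex_Main "HOL-Library.Function_Algebras"
    "HOL-Computational_Algebra.Formal_Power_Series"
begin

(* A vector of W(u) is recorded by its coordinates w.r.t. the basis [u]^j, j in Z. *)
type_synonym wvec = "int \<Rightarrow> complex"
type_synonym opr = "wvec \<Rightarrow> wvec"

definition Wspace :: "wvec set" where
  "Wspace = {v. finite {j. v j \<noteq> 0}}"

definition basisv :: "int \<Rightarrow> wvec" where
  "basisv j = (\<lambda>k. if k = j then 1 else 0)"

definition vsc :: "complex \<Rightarrow> wvec \<Rightarrow> wvec" where
  "vsc c v = (\<lambda>j. c * v j)"

definition osc :: "complex \<Rightarrow> opr \<Rightarrow> opr" where
  "osc c T = (\<lambda>v. vsc c (T v))"

definition parity_seq :: "nat \<Rightarrow> nat \<Rightarrow> (int \<Rightarrow> int) \<Rightarrow> bool" where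
  "parity_seq m n s \<longleftrightarrow> m \<noteq> n \<and> 3 \<le> m + n \<and> (\<forall>i. s i = 1 \<or> s i = -1)
     \<and> (\<forall>i. s (i + int (m + n)) = s i)
     \<and> card {i \<in> {0..<int (m + n)}. s i = 1} = m"

definition deg :: "(int \<Rightarrow> int) \<Rightarrow> int \<Rightarrow> int" where
  "deg s i = (1 - s i * s (i + 1)) div 2"

definition vpar :: "(int \<Rightarrow> int) \<Rightarrow> int \<Rightarrow> int" where
  "vpar s j = (1 - s j) div 2"

definition Acart :: "(int \<Rightarrow> int) \<Rightarrow> int \<Rightarrow> int \<Rightarrow> int \<Rightarrow> int" where
  "Acart s N i j =
     (if i mod N = j mod N then s i + s (i + 1) else 0)
     - (if i mod N = (j + 1) mod N then s i else 0)
     - (if (i + 1) mod N = j mod N then s j else 0)"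

definition Mmat :: "(int \<Rightarrow> int) \<Rightarrow> int \<Rightarrow> int \<Rightarrow> int \<Rightarrow> int" where
  "Mmat s N i j =
     (if (i - 1) mod N = j mod N then s i
      else if (i + 1) mod N = j mod N then - s j else 0)"

(* \bar j : \bar 0 = 0, \bar{j+1} = \bar j + s_{j+1} *)
definition sbar :: "(int \<Rightarrow> int) \<Rightarrow> int \<Rightarrow> int" where
  "sbar s j = (if 0 \<le> j then (\<Sum>k\<in>{1..j}. s k) else - (\<Sum>k\<in>{j+1..0}. s k))"

(* q_3^{\bar j} u, with q_3 = d^{-1} q^{-1} *)
definition aval :: "(int \<Rightarrow> int) \<Rightarrow> complex \<Rightarrow> complex \<Rightarrow> complex \<Rightarrow> int \<Rightarrow> complex" where
  "aval s d q u j = (inverse (d * q)) powi (sbar s j) * u"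

(* E_i(z)[u]^j = delta(a_j/z)[u]^{j+1} if i = j mod N; delta(a/z) = sum_r a^r z^{-r}.
   Eop .. i r is the coefficient E_{i,r} of z^{-r}, extended linearly. *)
definition Eop :: "(int \<Rightarrow> int) \<Rightarrow> int \<Rightarrow> complex \<Rightarrow> complex \<Rightarrow> complex \<Rightarrow> int \<Rightarrow> int \<Rightarrow> opr" where
  "Eop s N d q u i r v =
     (\<lambda>k. if (k - 1) mod N = i mod N then (aval s d q u (k - 1)) powi r * v (k - 1) else 0)"

definition Fop :: "(int \<Rightarrow> int) \<Rightarrow> int \<Rightarrow> complex \<Rightarrow> complex \<Rightarrow> complex \<Rightarrow> int \<Rightarrow> int \<Rightarrow> opr" where
  "Fop s N d q u i r v =
     (\<lambda>k. if k mod N = i mod N then of_int (s (k + 1)) * (aval s d q u k) powi r * v (k + 1) else 0)"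

definition psi_fps :: "complex \<Rightarrow> int \<Rightarrow> complex fps" where
  "psi_fps q k = (fps_const (q powi k) - fps_const (q powi (- k)) * fps_X) * inverse (1 - fps_X)"

(* coefficient of z^{-r} in the expansion of psi_k(a/z) in powers of z^{-1} *)
definition psi_inf :: "complex \<Rightarrow> int \<Rightarrow> complex \<Rightarrow> nat \<Rightarrow> complex" where
  "psi_inf q k a r = fps_nth (psi_fps q k) r * a ^ r"

(* coefficient of z^{r} in the expansion of psi_k(a/z) in powers of z:
   with y = z/a, psi_k(a/z) = (q^{-k} - q^k y)/(1 - y) *)
definition psi_zero :: "complex \<Rightarrow> int \<Rightarrow> complex \<Rightarrow> nat \<Rightarrow> complex" where
  "psi_zero q k a r =
     fps_nth ((fps_const (q powi (- k)) - fps_const (q powi k) * fps_X) * inverse (1 - fps_X)) r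
       * (inverse a) ^ r"

(* eigenvalue of the coefficient of z^{-r} of K_i^+(z) on [u]^j *)
definition kp_eig :: "(int \<Rightarrow> int) \<Rightarrow> int \<Rightarrow> complex \<Rightarrow> complex \<Rightarrow> complex \<Rightarrow> int \<Rightarrow> nat \<Rightarrow> int \<Rightarrow> complex" where
  "kp_eig s N d q u i r j =
     (if j mod N = i mod N then psi_inf q (- s j) (aval s d q u j) r
      else if (j - 1) mod N = i mod N then psi_inf q (s j) (aval s d q u (j - 1)) r
      else (if r = 0 then 1 else 0))"

(* eigenvalue of the coefficient of z^{r} of K_i^-(z) on [u]^j *)
definition km_eig :: "(int \<Rightarrow> int) \<Rightarrow> int \<Rightarrow> complex \<Rightarrow> complex \<Rightarrow> complex \<Rightarrow> int \<Rightarrow> nat \<Rightarrow> int \<Rightarrow> complex" where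
  "km_eig s N d q u i r j =
     (if j mod N = i mod N then psi_zero q (- s j) (aval s d q u j) r
      else if (j - 1) mod N = i mod N then psi_zero q (s j) (aval s d q u (j - 1)) r
      else (if r = 0 then 1 else 0))"

definition KpW :: "(int \<Rightarrow> int) \<Rightarrow> int \<Rightarrow> complex \<Rightarrow> complex \<Rightarrow> complex \<Rightarrow> int \<Rightarrow> nat \<Rightarrow> opr" where
  "KpW s N d q u i r v = (\<lambda>j. kp_eig s N d q u i r j * v j)"

definition KmW :: "(int \<Rightarrow> int) \<Rightarrow> int \<Rightarrow> complex \<Rightarrow> complex \<Rightarrow> complex \<Rightarrow> int \<Rightarrow> nat \<Rightarrow> opr" where
  "KmW s N d q u i r v = (\<lambda>j. km_eig s N d q u i r j * v j)"

definition compositions :: "nat \<Rightarrow> nat \<Rightarrow> nat list set" where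
  "compositions n k = {rs. length rs = k \<and> (\<forall>r\<in>set rs. 0 < r) \<and> sum_list rs = n}"

definition op_comp_list :: "(nat \<Rightarrow> opr) \<Rightarrow> nat list \<Rightarrow> opr" where
  "op_comp_list c rs = foldr (\<lambda>r T. c r \<circ> T) rs id"

(* coefficient of z^n in exp(sum_{r>0} c_r z^r) = sum_k (1/k!) (sum_r c_r z^r)^k *)
definition op_exp_coef :: "(nat \<Rightarrow> opr) \<Rightarrow> nat \<Rightarrow> opr" where
  "op_exp_coef c n = (\<Sum>k\<in>{0..n}. osc (1 / fact k) (\<Sum>rs\<in>compositions n k. op_comp_list c rs))"

(* K_i^+(z) = K_i exp((q-q^{-1}) sum_{r>0} H_{i,r} z^{-r}) : coefficient of z^{-n} *)
definition Kplus :: "complex \<Rightarrow> (int \<Rightarrow> opr) \<Rightarrow> (int \<Rightarrow> int \<Rightarrow> opr) \<Rightarrow> int \<Rightarrow> nat \<Rightarrow> opr" where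
  "Kplus q K H i n = K i \<circ> op_exp_coef (\<lambda>r. osc (q - inverse q) (H i (int r))) n"

(* K_i^-(z) = K_i^{-1} exp(-(q-q^{-1}) sum_{r>0} H_{i,-r} z^{r}) : coefficient of z^{n} *)
definition Kminus :: "complex \<Rightarrow> (int \<Rightarrow> opr) \<Rightarrow> (int \<Rightarrow> int \<Rightarrow> opr) \<Rightarrow> int \<Rightarrow> nat \<Rightarrow> opr" where
  "Kminus q Kinv H i n = Kinv i \<circ> op_exp_coef (\<lambda>r. osc (- (q - inverse q)) (H i (- int r))) n"

(* coefficient of z^{-t} (t in Z) of K_i^+(z) resp. K_i^-(z) *)
definition KZp :: "complex \<Rightarrow> (int \<Rightarrow> opr) \<Rightarrow> (int \<Rightarrow> int \<Rightarrow> opr) \<Rightarrow> int \<Rightarrow> int \<Rightarrow> opr" where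
  "KZp q K H i t = (if t < 0 then (\<lambda>v. 0) else Kplus q K H i (nat t))"

definition KZm :: "complex \<Rightarrow> (int \<Rightarrow> opr) \<Rightarrow> (int \<Rightarrow> int \<Rightarrow> opr) \<Rightarrow> int \<Rightarrow> int \<Rightarrow> opr" where
  "KZm q Kinv H i t = (if 0 < t then (\<lambda>v. 0) else Kminus q Kinv H i (nat (- t)))"

type_synonym gen = "opr \<times> (int \<Rightarrow> int) \<times> int"   (* operator, weight in \hat Q, parity *)

definition unitw :: "int \<Rightarrow> int \<Rightarrow> int \<Rightarrow> int" where
  "unitw N i = (\<lambda>k. if k mod N = i mod N then 1 else 0)"

definition wpair :: "(int \<Rightarrow> int) \<Rightarrow> int \<Rightarrow> (int \<Rightarrow> int) \<Rightarrow> (int \<Rightarrow> int) \<Rightarrow> int" where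
  "wpair s N \<alpha> \<beta> = (\<Sum>k\<in>{0..<N}. \<Sum>l\<in>{0..<N}. \<alpha> k * \<beta> l * Acart s N k l)"

definition qbr :: "(int \<Rightarrow> int) \<Rightarrow> int \<Rightarrow> complex \<Rightarrow> gen \<Rightarrow> gen \<Rightarrow> gen" where
  "qbr s N q X Y =
     (case X of (x, \<alpha>, p) \<Rightarrow> case Y of (y, \<beta>, p') \<Rightarrow>
       ((\<lambda>v. x (y v) - vsc ((-1) powi (p * p') * q powi (wpair s N \<alpha> \<beta>)) (y (x v))),
        \<alpha> + \<beta>, p + p'))"

definition lin_on :: "wvec set \<Rightarrow> opr \<Rightarrow> bool" where
  "lin_on W T \<longleftrightarrow> (\<forall>v\<in>W. T v \<in> W) \<and> (\<forall>v\<in>W. \<forall>w\<in>W. T (v + w) = T v + T w)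
     \<and> (\<forall>c. \<forall>v\<in>W. T (vsc c v) = vsc c (T v))"

definition Wpar :: "(int \<Rightarrow> int) \<Rightarrow> int \<Rightarrow> wvec set" where
  "Wpar s p = {v \<in> Wspace. \<forall>j. v j \<noteq> 0 \<longrightarrow> vpar s j = p}"

definition has_parity :: "(int \<Rightarrow> int) \<Rightarrow> int \<Rightarrow> opr \<Rightarrow> bool" where
  "has_parity s e T \<longleftrightarrow> (\<forall>p\<in>{0,1}. \<forall>v\<in>Wpar s p. T v \<in> Wpar s ((p + e) mod 2))"

(* the defining relations (1)-(6) of E_s, stated for the action on W(u) *)
definition Es_module ::
  "nat \<Rightarrow> nat \<Rightarrow> (int \<Rightarrow> int) \<Rightarrow> complex \<Rightarrow> complex \<Rightarrow>
   (int \<Rightarrow> int \<Rightarrow> opr) \<Rightarrow> (int \<Rightarrow> int \<Rightarrow> opr) \<Rightarrow> (int \<Rightarrow> opr) \<Rightarrow> (int \<Rightarrow> opr) \<Rightarrow>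
   (int \<Rightarrow> int \<Rightarrow> opr) \<Rightarrow> bool" where
  "Es_module m n s d q E F K Kinv H \<longleftrightarrow>
   (let N = int (m + n); W = Wspace; I = {0..<N};
        A = Acart s N; M = Mmat s N;
        Kp = Kplus q K H; Km = Kminus q Kinv H;
        gE = (\<lambda>i r. (E i r, unitw N i, deg s i));
        gF = (\<lambda>i r. (F i r, - unitw N i, deg s i));
        br = qbr s N q
    in
    \<comment> \<open>operators are linear maps of W(u) of the right parity\<close>
    (\<forall>i\<in>I. \<forall>r. lin_on W (E i r) \<and> lin_on W (F i r)
              \<and> has_parity s (deg s i) (E i r) \<and> has_parity s (deg s i) (F i r)) \<and>
    (\<forall>i\<in>I. lin_on W (K i) \<and> lin_on W (Kinv i) \<and> has_parity s 0 (K i) \<and> has_parity s 0 (Kinv i)) \<and>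
    (\<forall>i\<in>I. \<forall>r. r \<noteq> 0 \<longrightarrow> lin_on W (H i r) \<and> has_parity s 0 (H i r)) \<and>
    \<comment> \<open>K_i invertible\<close>
    (\<forall>i\<in>I. \<forall>v\<in>W. K i (Kinv i v) = v \<and> Kinv i (K i v) = v) \<and>
    (\<forall>i\<in>I. \<forall>j\<in>I. \<forall>v\<in>W.
       \<comment> \<open>(1)\<close>
       K i (K j v) = K j (K i v) \<and>
       (\<forall>r. K i (E j r (Kinv i v)) = vsc (q powi A i j) (E j r v)) \<and>
       (\<forall>r. K i (F j r (Kinv i v)) = vsc (q powi (- A i j)) (F j r v)) \<and>
       \<comment> \<open>(2)\<close>
       (\<forall>a b. Kp i a (Kp j b v) = Kp j b (Kp i a v) \<and> Km i a (Km j b v) = Km j b (Km i a v)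
              \<and> Km i a (Kp j b v) = Kp j b (Km i a v)) \<and>
       \<comment> \<open>(3)\<close>
       (\<forall>KZ\<in>{KZp q K H, KZm q Kinv H}. \<forall>r k.
          vsc (d powi M i j) (KZ i (r + 1) (E j k v)) - vsc (q powi A i j) (KZ i r (E j (k + 1) v))
            = vsc (d powi M i j * q powi A i j) (E j k (KZ i (r + 1) v)) - E j (k + 1) (KZ i r v) \<and>
          vsc (d powi M i j) (KZ i (r + 1) (F j k v)) - vsc (q powi (- A i j)) (KZ i r (F j (k + 1) v))
            = vsc (d powi M i j * q powi (- A i j)) (F j k (KZ i (r + 1) v)) - F j (k + 1) (KZ i r v)) \<and>
       \<comment> \<open>(4)\<close>
       (\<forall>a b. E i a (F j b v) - vsc ((-1) powi (deg s i * deg s j)) (F j b (E i a v))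
          = (if i = j then vsc (1 / (q - inverse q)) (KZp q K H i (a + b) v - KZm q Kinv H i (a + b) v)
             else 0)) \<and>
       \<comment> \<open>(5)\<close>
       (A i j = 0 \<longrightarrow> (\<forall>a b.
          E i a (E j b v) - vsc ((-1) powi (deg s i * deg s j)) (E j b (E i a v)) = 0 \<and>
          F i a (F j b v) - vsc ((-1) powi (deg s i * deg s j)) (F j b (F i a v)) = 0)) \<and>
       (A i j \<noteq> 0 \<longrightarrow> (\<forall>a b.
          vsc (d powi M i j) (E i (a + 1) (E j b v)) - vsc (q powi A i j) (E i a (E j (b + 1) v))
            = vsc ((-1) powi (deg s i * deg s j))
                (vsc (d powi M i j * q powi A i j) (E j b (E i (a + 1) v)) - E j (b + 1) (E i a v)) \<and>
          vsc (d powi M i j) (F i (a + 1) (F j b v)) - vsc (q powi (- A i j)) (F i a (F j (b + 1) v))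
            = vsc ((-1) powi (deg s i * deg s j))
                (vsc (d powi M i j * q powi (- A i j)) (F j b (F i (a + 1) v)) - F j (b + 1) (F i a v))))) \<and>
    \<comment> \<open>(6) Serre relations, for g = E and g = F\<close>
    (\<forall>g\<in>{gE, gF}. \<forall>i\<in>I. \<forall>v\<in>W.
       (A i i \<noteq> 0 \<longrightarrow> (\<forall>e\<in>{1, -1}. \<forall>a1 a2 b.
          fst (br (g i a1) (br (g i a2) (g ((i + e) mod N) b))) v
          + fst (br (g i a2) (br (g i a1) (g ((i + e) mod N) b))) v = 0)) \<and>
       (m * n \<noteq> 2 \<and> A i i = 0 \<longrightarrow> (\<forall>a1 a2 b1 b2.
          fst (br (g i a1) (br (g ((i + 1) mod N) b1) (br (g i a2) (g ((i - 1) mod N) b2)))) v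
          + fst (br (g i a2) (br (g ((i + 1) mod N) b1) (br (g i a1) (g ((i - 1) mod N) b2)))) v = 0)) \<and>
       (m * n = 2 \<and> A i i \<noteq> 0 \<longrightarrow> (\<forall>a1 a2 b1 b2 c.
          (let L = (\<lambda>a1 a2 b1 b2. fst (br (g ((i - 1) mod N) a1) (br (g ((i + 1) mod N) b1)
                      (br (g ((i - 1) mod N) a2) (br (g ((i + 1) mod N) b2) (g i c))))) v);
               R = (\<lambda>a1 a2 b1 b2. fst (br (g ((i + 1) mod N) b1) (br (g ((i - 1) mod N) a1)
                      (br (g ((i + 1) mod N) b2) (br (g ((i - 1) mod N) a2) (g i c))))) v)
           in L a1 a2 b1 b2 + L a2 a1 b1 b2 + L a1 a2 b2 b1 + L a2 a1 b2 b1
              = R a1 a2 b1 b2 + R a2 a1 b1 b2 + R a1 a2 b2 b1 + R a2 a1 b2 b1)))))"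

definition irreducible_module ::
  "int \<Rightarrow> (int \<Rightarrow> int \<Rightarrow> opr) \<Rightarrow> (int \<Rightarrow> int \<Rightarrow> opr) \<Rightarrow> (int \<Rightarrow> opr) \<Rightarrow> (int \<Rightarrow> opr) \<Rightarrow>
   (int \<Rightarrow> int \<Rightarrow> opr) \<Rightarrow> bool" where
  "irreducible_module N E F K Kinv H \<longleftrightarrow>
     Wspace \<noteq> {0} \<and>
     (\<forall>U. U \<subseteq> Wspace \<and> 0 \<in> U \<and> (\<forall>v\<in>U. \<forall>w\<in>U. v + w \<in> U) \<and> (\<forall>c. \<forall>v\<in>U. vsc c v \<in> U)
        \<and> (\<forall>i\<in>{0..<N}. \<forall>v\<in>U. K i v \<in> U \<and> Kinv i v \<in> U
              \<and> (\<forall>r. E i r v \<in> U \<and> F i r v \<in> U) \<and> (\<forall>r. r \<noteq> 0 \<longrightarrow> H i r v \<in> U))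
      \<longrightarrow> U = {0} \<or> U = Wspace)"

definition tame_module :: "int \<Rightarrow> (int \<Rightarrow> nat \<Rightarrow> opr) \<Rightarrow> (int \<Rightarrow> nat \<Rightarrow> opr) \<Rightarrow> bool" where
  "tame_module N Kp Km \<longleftrightarrow>
     (\<exists>B. B \<subseteq> Wspace \<and> \<not> module.dependent vsc B \<and> module.span vsc B = Wspace
        \<and> (\<forall>b\<in>B. b \<noteq> 0 \<and> (\<forall>i\<in>{0..<N}. \<forall>r. (\<exists>c. Kp i r b = vsc c b) \<and> (\<exists>c. Km i r b = vsc c b)))) \<and>
     (\<forall>lp lm. \<forall>v\<in>Wspace. \<forall>w\<in>Wspace.
        (\<forall>i\<in>{0..<N}. \<forall>r. Kp i r v = vsc (lp i r) v \<and> Km i r v = vsc (lm i r) v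
                       \<and> Kp i r w = vsc (lp i r) w \<and> Km i r w = vsc (lm i r) w) \<and> v \<noteq> 0
        \<longrightarrow> (\<exists>c. w = vsc c v))"

definition level_zero :: "int \<Rightarrow> (int \<Rightarrow> opr) \<Rightarrow> bool" where
  "level_zero N K \<longleftrightarrow> (\<forall>v\<in>Wspace. foldr (\<lambda>i T. K i \<circ> T) [0..N - 1] id v = v)"

end

theory Submission
  imports Defs
begin

unbundle fps_syntax

lemma sbar_step: "sbar s (j + 1) = sbar s j + s (j + 1)"
proof (cases "0 \<le> j")
  case True
  then have "{1..j+1} = insert (j+1) {1..j}" by auto
  then show ?thesis using True by (simp add: sbar_def)
next
  case False
  show ?thesis
  proof (cases "j = -1")
    case True then show ?thesis by (simp add: sbar_def)
  next
    case F2: False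
    then have "{j+1..0} = insert (j+1) {j+2..0}" using False by auto
    then show ?thesis using False F2 by (simp add: sbar_def add.commute)
  qed
qed

locale WU =
  fixes m n :: nat and s :: "int \<Rightarrow> int" and d q u :: complex
  assumes ps: "parity_seq m n s" and d0: "d \<noteq> 0" and q0: "q \<noteq> 0"
    and gen: "\<forall>a b c :: int. (d / q) powi a * (q ^ 2) powi b * (inverse (d * q)) powi c = 1
            \<longrightarrow> a = b \<and> b = c"
    and u0: "u \<noteq> 0"
  fixes N :: int
  assumes Ndef: "N = int (m + n)"
begin

abbreviation av :: "int \<Rightarrow> complex" where "av \<equiv> aval s d q u"

lemma N3: "N \<ge> 3" using ps Ndef by (simp add: parity_seq_def)
lemma Npos: "N > 0" using N3 by simp
lemma mn: "m \<noteq> n" using ps by (simp add: parity_seq_def)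

lemma s_pm: "s i = 1 \<or> s i = -1" using ps by (simp add: parity_seq_def)
lemma s_sq: "s i * s i = 1" using s_pm[of i] by auto

lemma s_perN: "s (i + N) = s i" using ps Ndef by (simp add: parity_seq_def)

lemma s_per_nat: "s (i + N * int t) = s i"
proof (induction t arbitrary: i)
  case 0 then show ?case by simp
next
  case (Suc t)
  have "s (i + N * int (Suc t)) = s ((i + N * int t) + N)" by (simp add: algebra_simps)
  also have "\<dots> = s i" using s_perN Suc by simp
  finally show ?case .
qed

lemma s_per: "s (i + N * t) = s i"
proof (cases "t \<ge> 0")
  case True then show ?thesis using s_per_nat[of i "nat t"] by simp
next
  case False
  then have "s ((i + N * t) + N * int (nat (- t))) = s (i + N * t)" using s_per_nat by blast
  then show ?thesis using False by simp
qed

lemma s_mod: "s (i mod N) = s i"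
  using s_per[of "i mod N" "i div N"] by (simp add: mult.commute)

lemma s_cong: "i mod N = j mod N \<Longrightarrow> s i = s j"
  by (metis s_mod)

lemma av_step: "av (j + 1) = inverse (d * q) powi s (j + 1) * av j"
  by (simp add: aval_def sbar_step power_int_add d0 q0)

lemma av_nz: "av j \<noteq> 0"
  by (simp add: aval_def d0 q0 u0)

lemma q3pow: "inverse (d * q) powi c = 1 \<Longrightarrow> c = 0"
  using gen[rule_format, of 0 0 c] by simp

lemma q2pow: "q ^ 2 \<noteq> 1"
  using gen[rule_format, of 0 1 0] by auto

lemma q_ne1: "q \<noteq> 1" and q_nem1: "q \<noteq> -1"
  using q2pow by auto

lemma qinv_ne: "q - inverse q \<noteq> 0"
proof
  assume "q - inverse q = 0"
  then have "q * q = 1" using q0 by (simp add: field_simps)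
  then show False using q2pow by (simp add: power2_eq_square)
qed

lemma qpow_s_ne: "q powi (s j) \<noteq> q powi (- s j)"
proof
  assume "q powi (s j) = q powi (- s j)"
  then show False using s_pm[of j] q0 qinv_ne by (auto simp: power_int_minus field_simps)
qed

end

lemma inv_1mX: "inverse (1 - fps_X :: complex fps) = Abs_fps (\<lambda>_. 1)"
proof -
  have "inverse (inverse (Abs_fps (\<lambda>_. 1::complex))) = Abs_fps (\<lambda>_. 1)"
    by (rule fps_inverse_idempotent) simp
  then show ?thesis by (simp add: fps_inverse_gp')
qed

lemma psi_series_nth:
  "fps_nth ((fps_const A - fps_const B * fps_X) * inverse (1 - fps_X)) r
     = (if r = 0 then A else A - (B::complex))"
proof -
  have "(fps_const A - fps_const B * fps_X) * inverse (1 - fps_X)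
        = fps_const A * Abs_fps (\<lambda>_. 1) - fps_const B * (fps_X * Abs_fps (\<lambda>_. 1))"
    by (simp add: inv_1mX algebra_simps)
  then show ?thesis by (simp add: fps_X_mult_nth)
qed

lemma psi_fps_nth: "fps_nth (psi_fps q k) r = (if r = 0 then q powi k else q powi k - q powi (- k))"
  by (simp add: psi_fps_def psi_series_nth)

lemma psi_inf_eq: "psi_inf q k a r = (if r = 0 then q powi k else q powi k - q powi (- k)) * a ^ r"
  by (simp add: psi_inf_def psi_fps_nth)

lemma psi_zero_eq: "psi_zero q k a r = (if r = 0 then q powi (-k) else q powi (-k) - q powi k) * (inverse a) ^ r"
  by (simp add: psi_zero_def psi_series_nth)

lemma compositions_0: "compositions n 0 = (if n = 0 then {[]} else {})"
  by (auto simp: compositions_def)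

lemma compositions_Suc:
  "compositions n (Suc k) = (\<Union>i\<in>{1..n}. (#) i ` compositions (n - i) k)"
proof (intro set_eqI iffI)
  fix rs assume "rs \<in> compositions n (Suc k)"
  then obtain r rs' where rs: "rs = r # rs'" "length rs' = k" "0 < r" "\<forall>x\<in>set rs'. 0 < x"
     "r + sum_list rs' = n"
    by (cases rs) (auto simp: compositions_def)
  then show "rs \<in> (\<Union>i\<in>{1..n}. (#) i ` compositions (n - i) k)"
    by (auto simp: compositions_def intro!: bexI[of _ r])
next
  fix rs assume "rs \<in> (\<Union>i\<in>{1..n}. (#) i ` compositions (n - i) k)"
  then show "rs \<in> compositions n (Suc k)" by (auto simp: compositions_def)
qed

lemma finite_compositions: "finite (compositions n k)"
proof -
  have "compositions n k \<subseteq> {rs. set rs \<subseteq> {0..n} \<and> length rs = k}"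
  proof
    fix rs assume "rs \<in> compositions n k"
    then have "\<forall>x\<in>set rs. x \<le> sum_list rs" and "sum_list rs = n"
      by (auto simp: compositions_def member_le_sum_list)
    then show "rs \<in> {rs. set rs \<subseteq> {0..n} \<and> length rs = k}"
      using \<open>rs \<in> compositions n k\<close> by (auto simp: compositions_def)
  qed
  then show ?thesis by (rule finite_subset) (rule finite_lists_length_eq, simp)
qed

lemma fps_power_compositions:
  fixes f :: "'a::comm_ring_1 fps"
  assumes f0: "f $ 0 = 0"
  shows "(f ^ k) $ n = (\<Sum>rs\<in>compositions n k. prod_list (map (\<lambda>r. f $ r) rs))"
proof (induction k arbitrary: n)
  case 0 then show ?case by (simp add: compositions_0)
next
  case (Suc k)
  have "(f ^ Suc k) $ n = (\<Sum>i=0..n. f $ i * (f ^ k) $ (n - i))"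
    by (simp add: fps_mult_nth)
  also have "\<dots> = (\<Sum>i=1..n. f $ i * (f ^ k) $ (n - i))"
  proof (cases n)
    case 0 then show ?thesis using f0 by simp
  next
    case (Suc n')
    have "{0..n} = insert 0 {1..n}" by auto
    then show ?thesis using f0 by simp
  qed
  also have "\<dots> = (\<Sum>i=1..n. \<Sum>rs\<in>compositions (n - i) k. prod_list (map (\<lambda>r. f $ r) (i # rs)))"
    by (simp add: Suc.IH sum_distrib_left)
  also have "\<dots> = (\<Sum>i=1..n. \<Sum>rs\<in>(#) i ` compositions (n - i) k. prod_list (map (\<lambda>r. f $ r) rs))"
    by (subst sum.reindex) (auto simp: inj_on_def)
  also have "\<dots> = (\<Sum>rs\<in>(\<Union>i\<in>{1..n}. (#) i ` compositions (n - i) k). prod_list (map (\<lambda>r. f $ r) rs))"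
    by (rule sum.UNION_disjoint[symmetric]) (auto simp: finite_compositions)
  finally show ?case by (simp add: compositions_Suc)
qed

lemma exp_compose_exists:
  fixes g :: "complex fps"
  assumes g0: "g $ 0 = 1"
  shows "\<exists>F. F $ 0 = 0 \<and> fps_exp 1 oo F = g"
proof -
  let ?e = "fps_exp (1::complex) - 1"
  let ?F = "fps_inv ?e oo (g - 1)"
  have e0: "?e $ 0 = 0" by simp
  have h0: "(g - 1) $ 0 = 0" using g0 by simp
  have i0: "fps_inv ?e $ 0 = 0" by (simp add: fps_inv_def)
  have F0: "?F $ 0 = 0" using i0 by simp
  have "?e oo ?F = (?e oo fps_inv ?e) oo (g - 1)"
    by (rule fps_compose_assoc[OF h0 i0])
  also have "\<dots> = g - 1" using fps_inv_fps_exp_compose(2)[of "1::complex"] h0 by simp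
  finally have "?e oo ?F = g - 1" .
  then have "fps_exp 1 oo ?F = g"
    by (simp add: fps_compose_sub_distrib)
  then show ?thesis using F0 by blast
qed

definition dg :: "(int \<Rightarrow> complex) \<Rightarrow> opr" where
  "dg h v = (\<lambda>j. h j * v j)"

lemma sum_opr_apply: "(sum T S :: opr) v j = (\<Sum>x\<in>S. T x v j)"
proof (cases "finite S")
  case True then show ?thesis by (induction S rule: finite_induct) auto
next
  case False then show ?thesis by simp
qed

lemma op_comp_list_dg:
  assumes "\<forall>r. 0 < r \<longrightarrow> c r = dg (h r)" and "\<forall>r\<in>set rs. 0 < r"
  shows "op_comp_list c rs v = dg (\<lambda>j. prod_list (map (\<lambda>r. h r j) rs)) v"
  using assms(2)
proof (induction rs arbitrary: v)
  case Nil then show ?case by (simp add: op_comp_list_def dg_def)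
next
  case (Cons r rs)
  then show ?case using assms(1)
    by (simp add: op_comp_list_def dg_def fun_eq_iff)
qed

lemma op_exp_coef_dg:
  assumes "\<forall>r. 0 < r \<longrightarrow> c r = dg (h r)"
  shows "op_exp_coef c n v j
     = (fps_exp 1 oo Abs_fps (\<lambda>r. if r = 0 then 0 else h r j)) $ n * v j"
proof -
  let ?F = "Abs_fps (\<lambda>r. if r = 0 then 0 else h r j)"
  have "op_exp_coef c n v j
     = (\<Sum>k=0..n. (1 / fact k) * (\<Sum>rs\<in>compositions n k. prod_list (map (\<lambda>r. h r j) rs) * v j))"
    unfolding op_exp_coef_def sum_opr_apply osc_def vsc_def
    apply (rule sum.cong, simp)
    apply (simp add: sum_opr_apply)
    apply (rule sum.cong, simp)
    apply (subst op_comp_list_dg[OF assms])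
     apply (auto simp: compositions_def dg_def)
    done
  also have "\<dots> = (\<Sum>k=0..n. (1 / fact k) * (?F ^ k) $ n) * v j"
  proof -
    have "(?F ^ k) $ n = (\<Sum>rs\<in>compositions n k. prod_list (map (\<lambda>r. h r j) rs))" for k
    proof -
      have "(?F ^ k) $ n = (\<Sum>rs\<in>compositions n k. prod_list (map (\<lambda>r. ?F $ r) rs))"
        by (rule fps_power_compositions) simp
      also have "\<dots> = (\<Sum>rs\<in>compositions n k. prod_list (map (\<lambda>r. h r j) rs))"
      proof (rule sum.cong[OF refl])
        fix rs assume "rs \<in> compositions n k"
        then have "\<forall>r\<in>set rs. 0 < r" by (simp add: compositions_def)
        then have "map (\<lambda>r. ?F $ r) rs = map (\<lambda>r. h r j) rs" by (induction rs) auto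
        then show "prod_list (map (\<lambda>r. ?F $ r) rs) = prod_list (map (\<lambda>r. h r j) rs)" by (metis (no_types, lifting))
      qed
      finally show ?thesis .
    qed
    then show ?thesis by (simp add: sum_distrib_right sum_distrib_left mult.assoc)
  qed
  also have "\<dots> = (fps_exp 1 oo ?F) $ n * v j"
    by (simp add: fps_compose_nth)
  finally show ?thesis .
qed


context WU
begin

abbreviation kp where "kp \<equiv> kp_eig s N d q u"
abbreviation km where "km \<equiv> km_eig s N d q u"

lemma kp0: "kp i 0 j = (if j mod N = i mod N then q powi (- s j)
    else if (j - 1) mod N = i mod N then q powi (s j) else 1)"
  by (simp add: kp_eig_def psi_inf_eq)

lemma km0: "km i 0 j = (if j mod N = i mod N then q powi (s j)
    else if (j - 1) mod N = i mod N then q powi (- s j) else 1)"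
  by (simp add: km_eig_def psi_zero_eq)

lemma kp0_nz: "kp i 0 j \<noteq> 0" by (simp add: kp0 q0)
lemma km0_nz: "km i 0 j \<noteq> 0" by (simp add: km0 q0)
lemma kpkm0: "kp i 0 j * km i 0 j = 1"
  by (simp add: kp0 km0 q0 power_int_minus)

definition Kc :: "int \<Rightarrow> opr" where "Kc i = dg (\<lambda>j. kp i 0 j)"
definition Kic :: "int \<Rightarrow> opr" where "Kic i = dg (\<lambda>j. km i 0 j)"

definition gp :: "int \<Rightarrow> int \<Rightarrow> complex fps" where
  "gp i j = Abs_fps (\<lambda>r. kp i r j / kp i 0 j)"
definition gm :: "int \<Rightarrow> int \<Rightarrow> complex fps" where
  "gm i j = Abs_fps (\<lambda>r. km i r j / km i 0 j)"

definition Fp :: "int \<Rightarrow> int \<Rightarrow> complex fps" where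
  "Fp i j = (SOME F. F $ 0 = 0 \<and> fps_exp 1 oo F = gp i j)"
definition Fm :: "int \<Rightarrow> int \<Rightarrow> complex fps" where
  "Fm i j = (SOME F. F $ 0 = 0 \<and> fps_exp 1 oo F = gm i j)"

lemma Fp_prop: "Fp i j $ 0 = 0 \<and> fps_exp 1 oo Fp i j = gp i j"
proof -
  have "gp i j $ 0 = 1" using kp0_nz by (simp add: gp_def)
  from exp_compose_exists[OF this] show ?thesis unfolding Fp_def by (rule someI_ex)
qed

lemma Fm_prop: "Fm i j $ 0 = 0 \<and> fps_exp 1 oo Fm i j = gm i j"
proof -
  have "gm i j $ 0 = 1" using km0_nz by (simp add: gm_def)
  from exp_compose_exists[OF this] show ?thesis unfolding Fm_def by (rule someI_ex)
qed

definition Hc :: "int \<Rightarrow> int \<Rightarrow> opr" where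
  "Hc i r = (if 0 < r then dg (\<lambda>j. Fp i j $ nat r / (q - inverse q))
             else if r < 0 then dg (\<lambda>j. Fm i j $ nat (- r) / (- (q - inverse q)))
             else dg (\<lambda>j. 0))"

lemma Fp_abs: "Abs_fps (\<lambda>r. if r = 0 then 0 else Fp i j $ r) = Fp i j"
  using Fp_prop by (intro fps_ext) auto
lemma Fm_abs: "Abs_fps (\<lambda>r. if r = 0 then 0 else Fm i j $ r) = Fm i j"
  using Fm_prop by (intro fps_ext) auto

lemma Kplus_eq: "Kplus q Kc Hc i r = KpW s N d q u i r"
proof (intro ext)
  fix v j
  let ?c = "\<lambda>r. osc (q - inverse q) (Hc i (int r))"
  have c: "\<forall>r. 0 < r \<longrightarrow> ?c r = dg (\<lambda>j. Fp i j $ r)"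
    using qinv_ne by (auto simp: osc_def vsc_def Hc_def dg_def fun_eq_iff)
  have "Kplus q Kc Hc i r v j = kp i 0 j * op_exp_coef ?c r v j"
    by (simp add: Kplus_def Kc_def dg_def)
  also have "\<dots> = kp i 0 j * ((fps_exp 1 oo Fp i j) $ r * v j)"
    by (simp add: op_exp_coef_dg[OF c] Fp_abs)
  also have "\<dots> = kp i r j * v j"
    using Fp_prop kp0_nz by (simp add: gp_def)
  finally show "Kplus q Kc Hc i r v j = KpW s N d q u i r v j" by (simp add: KpW_def)
qed

lemma Kminus_eq: "Kminus q Kic Hc i r = KmW s N d q u i r"
proof (intro ext)
  fix v j
  let ?c = "\<lambda>r. osc (- (q - inverse q)) (Hc i (- int r))"
  have c: "\<forall>r. 0 < r \<longrightarrow> ?c r = dg (\<lambda>j. Fm i j $ r)"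
    using qinv_ne by (auto simp: osc_def vsc_def Hc_def dg_def fun_eq_iff)
  have "Kminus q Kic Hc i r v j = km i 0 j * op_exp_coef ?c r v j"
    by (simp add: Kminus_def Kic_def dg_def)
  also have "\<dots> = km i 0 j * ((fps_exp 1 oo Fm i j) $ r * v j)"
    by (subst op_exp_coef_dg[OF c]) (simp add: Fm_abs)
  also have "\<dots> = km i r j * v j"
    using Fm_prop km0_nz by (simp add: gm_def)
  finally show "Kminus q Kic Hc i r v j = KmW s N d q u i r v j" by (simp add: KmW_def)
qed

end

context WU
begin

lemma core_modeq: "((x::int) + a) mod N = (x + b) mod N \<longleftrightarrow> N dvd (a - b)"
proof -
  have "((x + a) mod N = (x + b) mod N) \<longleftrightarrow> N dvd (x + a - (x + b))" by (rule mod_eq_dvd_iff)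
  also have "\<dots> \<longleftrightarrow> N dvd (a - b)" by simp
  finally show ?thesis .
qed

lemma small_dvd: "- N < c \<Longrightarrow> c < N \<Longrightarrow> (N dvd c) = (c = 0)"
proof
  assume h: "- N < c" "c < N" "N dvd c"
  then obtain t where ct: "c = N * t" by blast
  show "c = 0"
  proof (cases "t = 0")
    case False
    show ?thesis
    proof (cases "t > 0")
      case True
      then have "N * 1 \<le> N * t" using Npos by (intro mult_left_mono) auto
      then show ?thesis using h ct by linarith
    next
      case False
      then have "t \<le> -1" using \<open>t \<noteq> 0\<close> by simp
      then have "N * t \<le> N * (-1)" using Npos by (intro mult_left_mono) auto
      then show ?thesis using h ct by linarith
    qed
  qed (simp add: ct)
qed simp

lemma md1: "x mod N = (x + b) mod N \<longleftrightarrow> N dvd (0 - b)"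
  using core_modeq[of x "0" "b"] by (simp add: algebra_simps)
lemma md2: "x mod N = (b + x) mod N \<longleftrightarrow> N dvd (0 - b)"
  using core_modeq[of x "0" "b"] by (simp add: algebra_simps)
lemma md3: "x mod N = (x - b) mod N \<longleftrightarrow> N dvd (0 - (-b))"
  using core_modeq[of x "0" "(-b)"] by (simp add: algebra_simps)
lemma md4: "(x + a) mod N = x mod N \<longleftrightarrow> N dvd (a - 0)"
  using core_modeq[of x "a" "0"] by (simp add: algebra_simps)
lemma md5: "(x + a) mod N = (x + b) mod N \<longleftrightarrow> N dvd (a - b)"
  using core_modeq[of x "a" "b"] by (simp add: algebra_simps)
lemma md6: "(x + a) mod N = (b + x) mod N \<longleftrightarrow> N dvd (a - b)"
  using core_modeq[of x "a" "b"] by (simp add: algebra_simps)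
lemma md7: "(x + a) mod N = (x - b) mod N \<longleftrightarrow> N dvd (a - (-b))"
  using core_modeq[of x "a" "(-b)"] by (simp add: algebra_simps)
lemma md8: "(a + x) mod N = x mod N \<longleftrightarrow> N dvd (a - 0)"
  using core_modeq[of x "a" "0"] by (simp add: algebra_simps)
lemma md9: "(a + x) mod N = (x + b) mod N \<longleftrightarrow> N dvd (a - b)"
  using core_modeq[of x "a" "b"] by (simp add: algebra_simps)
lemma md10: "(a + x) mod N = (b + x) mod N \<longleftrightarrow> N dvd (a - b)"
  using core_modeq[of x "a" "b"] by (simp add: algebra_simps)
lemma md11: "(a + x) mod N = (x - b) mod N \<longleftrightarrow> N dvd (a - (-b))"
  using core_modeq[of x "a" "(-b)"] by (simp add: algebra_simps)
lemma md12: "(x - a) mod N = x mod N \<longleftrightarrow> N dvd ((-a) - 0)"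
  using core_modeq[of x "(-a)" "0"] by (simp add: algebra_simps)
lemma md13: "(x - a) mod N = (x + b) mod N \<longleftrightarrow> N dvd ((-a) - b)"
  using core_modeq[of x "(-a)" "b"] by (simp add: algebra_simps)
lemma md14: "(x - a) mod N = (b + x) mod N \<longleftrightarrow> N dvd ((-a) - b)"
  using core_modeq[of x "(-a)" "b"] by (simp add: algebra_simps)
lemma md15: "(x - a) mod N = (x - b) mod N \<longleftrightarrow> N dvd ((-a) - (-b))"
  using core_modeq[of x "(-a)" "(-b)"] by (simp add: algebra_simps)

lemmas mdsimps = md1 md2 md3 md4 md5 md6 md7 md8 md9 md10 md11 md12 md13 md14 md15 small_dvd

lemma s_mod_add: "s (x mod N + c) = s (x + c)"
  by (rule s_cong) (simp add: mod_simps)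
lemma s_mod_diff: "s (x mod N - c) = s (x - c)"
  by (rule s_cong) (simp add: mod_simps)

abbreviation E where "E \<equiv> Eop s N d q u"
abbreviation F where "F \<equiv> Fop s N d q u"

lemma E_diff: "E i r (v - w) = E i r v - E i r w"
  by (simp add: Eop_def fun_eq_iff algebra_simps)
lemma E_add: "E i r (v + w) = E i r v + E i r w"
  by (simp add: Eop_def fun_eq_iff algebra_simps)
lemma E_vsc: "E i r (vsc c v) = vsc c (E i r v)"
  by (simp add: Eop_def vsc_def fun_eq_iff algebra_simps)
lemma E_0: "E i r 0 = 0"
  by (simp add: Eop_def fun_eq_iff)
lemma F_diff: "F i r (v - w) = F i r v - F i r w"
  by (simp add: Fop_def fun_eq_iff algebra_simps)
lemma F_add: "F i r (v + w) = F i r v + F i r w"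
  by (simp add: Fop_def fun_eq_iff algebra_simps)
lemma F_vsc: "F i r (vsc c v) = vsc c (F i r v)"
  by (simp add: Fop_def vsc_def fun_eq_iff algebra_simps)
lemma F_0: "F i r 0 = 0"
  by (simp add: Fop_def fun_eq_iff)
lemma E_uminus: "E i r (- v) = - E i r v"
  by (simp add: Eop_def fun_eq_iff)
lemma F_uminus: "F i r (- v) = - F i r v"
  by (simp add: Fop_def fun_eq_iff)
lemma vsc_uminus: "vsc c (- v) = - vsc c v" by (simp add: vsc_def fun_eq_iff)
lemma vsc_0: "vsc c 0 = 0" by (simp add: vsc_def fun_eq_iff)
lemma vsc_diff: "vsc c (v - w) = vsc c v - vsc c w" by (simp add: vsc_def fun_eq_iff algebra_simps)
lemma vsc_add: "vsc c (v + w) = vsc c v + vsc c w" by (simp add: vsc_def fun_eq_iff algebra_simps)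
lemma vsc_vsc: "vsc c (vsc c' v) = vsc (c * c') v" by (simp add: vsc_def fun_eq_iff)

lemmas linsimps = E_uminus F_uminus vsc_uminus E_diff E_add E_vsc E_0 F_diff F_add F_vsc F_0 vsc_0 vsc_diff vsc_add vsc_vsc

lemma EE_zero: "x mod N \<noteq> (y + 1) mod N \<Longrightarrow> E x a (E y b w) = 0"
proof (rule ext)
  fix k assume h: "x mod N \<noteq> (y + 1) mod N"
  have "(k - 1) mod N = x mod N \<Longrightarrow> (k - 1 - 1) mod N = y mod N \<Longrightarrow> False"
  proof -
    assume a1: "(k - 1) mod N = x mod N" and a2: "(k - 1 - 1) mod N = y mod N"
    from a2 have "(k - 1 - 1 + 1) mod N = (y + 1) mod N" by (metis mod_add_left_eq)
    with a1 h show False by simp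
  qed
  then show "E x a (E y b w) k = 0 k" by (auto simp: Eop_def)
qed

lemma FF_zero: "x mod N \<noteq> (y - 1) mod N \<Longrightarrow> F x a (F y b w) = 0"
proof (rule ext)
  fix k assume h: "x mod N \<noteq> (y - 1) mod N"
  have "k mod N = x mod N \<Longrightarrow> (k + 1) mod N = y mod N \<Longrightarrow> False"
  proof -
    assume a1: "k mod N = x mod N" and a2: "(k + 1) mod N = y mod N"
    from a2 have "(k + 1 - 1) mod N = (y - 1) mod N" by (metis mod_diff_left_eq)
    with a1 h show False by simp
  qed
  then show "F x a (F y b w) k = 0 k" by (auto simp: Fop_def)
qed

end

context WU
begin

lemma wp_add_l: "wpair s N (\<alpha> + \<beta>) \<gamma> = wpair s N \<alpha> \<gamma> + wpair s N \<beta> \<gamma>"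
  by (simp add: wpair_def algebra_simps sum.distrib)
lemma wp_add_r: "wpair s N \<gamma> (\<alpha> + \<beta>) = wpair s N \<gamma> \<alpha> + wpair s N \<gamma> \<beta>"
  by (simp add: wpair_def algebra_simps sum.distrib)
lemma wp_diff_l: "wpair s N (\<alpha> - \<beta>) \<gamma> = wpair s N \<alpha> \<gamma> - wpair s N \<beta> \<gamma>"
  by (simp add: wpair_def algebra_simps sum_subtractf)
lemma wp_diff_r: "wpair s N \<gamma> (\<alpha> - \<beta>) = wpair s N \<gamma> \<alpha> - wpair s N \<gamma> \<beta>"
  by (simp add: wpair_def algebra_simps sum_subtractf)
lemma wp_uminus_l: "wpair s N (- \<alpha>) \<gamma> = - wpair s N \<alpha> \<gamma>"
  by (simp add: wpair_def sum_negf)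
lemma wp_uminus_r: "wpair s N \<gamma> (- \<alpha>) = - wpair s N \<gamma> \<alpha>"
  by (simp add: wpair_def sum_negf)
lemma wp_num_l: "wpair s N (numeral w * \<alpha>) \<gamma> = numeral w * wpair s N \<alpha> \<gamma>"
  by (simp add: wpair_def sum_distrib_left algebra_simps)
lemma wp_num_r: "wpair s N \<gamma> (numeral w * \<alpha>) = numeral w * wpair s N \<gamma> \<alpha>"
  by (simp add: wpair_def sum_distrib_left algebra_simps)

lemmas wpsimps = wp_add_l wp_add_r wp_diff_l wp_diff_r wp_uminus_l wp_uminus_r wp_num_l wp_num_r

lemma Acart_sym: "Acart s N x y = Acart s N y x"
proof -
  have "x mod N = y mod N \<Longrightarrow> s x + s (x + 1) = s y + s (y + 1)"
    by (metis s_cong mod_add_left_eq)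
  then show ?thesis unfolding Acart_def by (auto simp: eq_commute)
qed

lemma wp_sym: "wpair s N \<alpha> \<beta> = wpair s N \<beta> \<alpha>"
  unfolding wpair_def
  by (subst sum.swap) (simp add: Acart_sym[of _ _] algebra_simps)

lemma coef_eq:
  assumes "W1 + W2 = W3 + W4" and "P1 + P2 = P3 + P4"
  shows "((-1::complex) powi P1 * q powi W1) * ((-1) powi P2 * q powi W2)
       = ((-1) powi P3 * q powi W3) * ((-1) powi P4 * q powi W4)"
proof -
  have "((-1::complex) powi P1 * q powi W1) * ((-1) powi P2 * q powi W2) = (-1) powi (P1 + P2) * q powi (W1 + W2)"
    using q0 by (simp add: power_int_add)
  also have "\<dots> = (-1) powi (P3 + P4) * q powi (W3 + W4)" using assms by simp
  also have "\<dots> = ((-1) powi P3 * q powi W3) * ((-1) powi P4 * q powi W4)"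
    using q0 by (simp add: power_int_add)
  finally show ?thesis .
qed

lemma aux_ring1: "b * (a + (b + c)) + a * (b + c) = b * (2 * a + (b + c)) + (a * c::int)"
  by algebra

lemma aux_ring2: "a * (2 * b + (a + c)) + b * c = a * (b + (a + c)) + (b * (a + c)::int)"
  by algebra

lemma vsc_cong: "c = c' \<Longrightarrow> vsc c v = vsc c' v" by simp

lemma serre1E:
  assumes "e = 1 \<or> e = -1"
  shows "fst (qbr s N q (E i a1, unitw N i, deg s i) (qbr s N q (E i a2, unitw N i, deg s i)
          (E ((i+e) mod N) b, unitw N ((i+e) mod N), deg s ((i+e) mod N)))) v = 0"
  using assms N3
  by (auto simp: qbr_def linsimps EE_zero mdsimps mod_simps)

lemma serre1F:
  assumes "e = 1 \<or> e = -1"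
  shows "fst (qbr s N q (F i a1, - unitw N i, deg s i) (qbr s N q (F i a2, - unitw N i, deg s i)
          (F ((i+e) mod N) b, - unitw N ((i+e) mod N), deg s ((i+e) mod N)))) v = 0"
  using assms N3
  by (auto simp: qbr_def linsimps FF_zero mdsimps mod_simps)


lemma serre2E:
  assumes "N \<ge> 4"
  shows "fst (qbr s N q (E i a1, unitw N i, deg s i) (qbr s N q (E ((i+1) mod N) b1, unitw N ((i+1) mod N), deg s ((i+1) mod N))
      (qbr s N q (E i a2, unitw N i, deg s i) (E ((i-1) mod N) b2, unitw N ((i-1) mod N), deg s ((i-1) mod N))))) v = 0"
  using assms
  by (simp add: qbr_def linsimps EE_zero mdsimps mod_simps)

lemma serre2F:
  assumes "N \<ge> 4"
  shows "fst (qbr s N q (F i a1, - unitw N i, deg s i) (qbr s N q (F ((i+1) mod N) b1, - unitw N ((i+1) mod N), deg s ((i+1) mod N))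
      (qbr s N q (F i a2, - unitw N i, deg s i) (F ((i-1) mod N) b2, - unitw N ((i-1) mod N), deg s ((i-1) mod N))))) v = 0"
  using assms
  by (simp add: qbr_def linsimps FF_zero mdsimps mod_simps)

lemma serre3E:
  assumes "N = 3"
  shows "fst (qbr s N q (E ((i - 1) mod N) a1, unitw N ((i - 1) mod N), deg s ((i - 1) mod N))
     (qbr s N q (E ((i + 1) mod N) b1, unitw N ((i + 1) mod N), deg s ((i + 1) mod N))
     (qbr s N q (E ((i - 1) mod N) a2, unitw N ((i - 1) mod N), deg s ((i - 1) mod N))
     (qbr s N q (E ((i + 1) mod N) b2, unitw N ((i + 1) mod N), deg s ((i + 1) mod N))
       (E i c, unitw N i, deg s i))))) v
   = fst (qbr s N q (E ((i + 1) mod N) b1, unitw N ((i + 1) mod N), deg s ((i + 1) mod N))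
     (qbr s N q (E ((i - 1) mod N) a1, unitw N ((i - 1) mod N), deg s ((i - 1) mod N))
     (qbr s N q (E ((i + 1) mod N) b2, unitw N ((i + 1) mod N), deg s ((i + 1) mod N))
     (qbr s N q (E ((i - 1) mod N) a2, unitw N ((i - 1) mod N), deg s ((i - 1) mod N))
       (E i c, unitw N i, deg s i))))) v"
proof -
  have f: "N dvd 3" "\<not> N dvd 4" "\<not> N dvd 5" "N dvd 6" "\<not> N dvd 2" "\<not> N dvd 1" using assms by auto
  show ?thesis
  using f apply (simp add: qbr_def linsimps EE_zero mdsimps mod_simps wpsimps)
  apply (rule vsc_cong)
  apply (rule coef_eq)
  using wp_sym[of "unitw N ((i - 1) mod N)" "unitw N ((1 + i) mod N)"] apply (simp add: algebra_simps)
  apply (rule aux_ring1)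
  done
qed

lemma serre3F:
  assumes "N = 3"
  shows "fst (qbr s N q (F ((i - 1) mod N) a1, - unitw N ((i - 1) mod N), deg s ((i - 1) mod N))
     (qbr s N q (F ((i + 1) mod N) b1, - unitw N ((i + 1) mod N), deg s ((i + 1) mod N))
     (qbr s N q (F ((i - 1) mod N) a2, - unitw N ((i - 1) mod N), deg s ((i - 1) mod N))
     (qbr s N q (F ((i + 1) mod N) b2, - unitw N ((i + 1) mod N), deg s ((i + 1) mod N))
       (F i c, - unitw N i, deg s i))))) v
   = fst (qbr s N q (F ((i + 1) mod N) b1, - unitw N ((i + 1) mod N), deg s ((i + 1) mod N))
     (qbr s N q (F ((i - 1) mod N) a1, - unitw N ((i - 1) mod N), deg s ((i - 1) mod N))
     (qbr s N q (F ((i + 1) mod N) b2, - unitw N ((i + 1) mod N), deg s ((i + 1) mod N))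
     (qbr s N q (F ((i - 1) mod N) a2, - unitw N ((i - 1) mod N), deg s ((i - 1) mod N))
       (F i c, - unitw N i, deg s i))))) v"
proof -
  have f: "N dvd 3" "\<not> N dvd 4" "\<not> N dvd 5" "N dvd 6" "\<not> N dvd 2" "\<not> N dvd 1" using assms by auto
  show ?thesis
  using f apply (simp add: qbr_def linsimps FF_zero mdsimps mod_simps wpsimps)
  apply (rule vsc_cong)
  apply (rule coef_eq)
  using wp_sym[of "unitw N ((i - 1) mod N)" "unitw N ((i + 1) mod N)"] apply linarith
  apply (rule aux_ring2)
  done
qed

end

context WU
begin

lemma i_cases:
  assumes "0 \<le> i" "i < N"
    and "i = l mod N \<Longrightarrow> P" and "i = (l + 1) mod N \<Longrightarrow> P" and "i = (l - 1) mod N \<Longrightarrow> P"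
    and "i \<noteq> l mod N \<Longrightarrow> i \<noteq> (l + 1) mod N \<Longrightarrow> i \<noteq> (l - 1) mod N \<Longrightarrow>
          (i + 1) mod N \<noteq> l mod N \<Longrightarrow> (i - 1) mod N \<noteq> l mod N \<Longrightarrow> P"
  shows P
proof -
  have im: "i mod N = i" using assms(1,2) by simp
  consider "i = l mod N" | "i = (l + 1) mod N" | "i = (l - 1) mod N"
    | "i \<noteq> l mod N" "i \<noteq> (l + 1) mod N" "i \<noteq> (l - 1) mod N" by blast
  then show P
  proof cases
    case 4
    have "(i + 1) mod N \<noteq> l mod N"
    proof
      assume "(i + 1) mod N = l mod N"
      then have "(i + 1 - 1) mod N = (l - 1) mod N" by (metis mod_diff_left_eq)
      then show False using 4 im by simp
    qed
    moreover have "(i - 1) mod N \<noteq> l mod N"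
    proof
      assume "(i - 1) mod N = l mod N"
      then have "(i - 1 + 1) mod N = (l + 1) mod N" by (metis mod_add_left_eq)
      then show False using 4 im by simp
    qed
    ultimately show P using 4 assms(6) by blast
  qed (use assms in blast)+
qed

definition kpz :: "int \<Rightarrow> int \<Rightarrow> int \<Rightarrow> complex" where
  "kpz i t x = (if t < 0 then 0 else kp i (nat t) x)"
definition kmz :: "int \<Rightarrow> int \<Rightarrow> int \<Rightarrow> complex" where
  "kmz i t x = (if 0 < t then 0 else km i (nat (- t)) x)"

definition P :: "int \<Rightarrow> complex \<Rightarrow> int \<Rightarrow> complex" where
  "P k a t = (if t < 0 then 0 else if t = 0 then q powi k else (q powi k - q powi (- k)) * a powi t)"
definition Q :: "int \<Rightarrow> complex \<Rightarrow> int \<Rightarrow> complex" where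
  "Q k a t = (if 0 < t then 0 else if t = 0 then q powi (- k) else (q powi (- k) - q powi k) * a powi t)"

lemma kpz_self: "x mod N = i mod N \<Longrightarrow> kpz i t x = P (- s x) (av x) t"
  by (auto simp: kpz_def kp_eig_def P_def psi_inf_eq power_int_def)
lemma kpz_next: "(x - 1) mod N = i mod N \<Longrightarrow> x mod N \<noteq> i mod N \<Longrightarrow> kpz i t x = P (s x) (av (x - 1)) t"
  by (auto simp: kpz_def kp_eig_def P_def psi_inf_eq power_int_def)
lemma kpz_other: "x mod N \<noteq> i mod N \<Longrightarrow> (x - 1) mod N \<noteq> i mod N \<Longrightarrow> kpz i t x = (if t = 0 then 1 else 0)"
  by (auto simp: kpz_def kp_eig_def)
lemma kmz_self: "x mod N = i mod N \<Longrightarrow> kmz i t x = Q (- s x) (av x) t"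
  by (auto simp: kmz_def km_eig_def Q_def psi_zero_eq power_int_def power_inverse)
lemma kmz_next: "(x - 1) mod N = i mod N \<Longrightarrow> x mod N \<noteq> i mod N \<Longrightarrow> kmz i t x = Q (s x) (av (x - 1)) t"
  by (auto simp: kmz_def km_eig_def Q_def psi_zero_eq power_int_def power_inverse)
lemma kmz_other: "x mod N \<noteq> i mod N \<Longrightarrow> (x - 1) mod N \<noteq> i mod N \<Longrightarrow> kmz i t x = (if t = 0 then 1 else 0)"
  by (auto simp: kmz_def km_eig_def)

lemmas kzsimps = kpz_self kpz_next kpz_other kmz_self kmz_next kmz_other

lemma Pa: assumes a: "a \<noteq> 0" and sg: "\<sigma> = 1 \<or> \<sigma> = -1" "\<tau> = 1 \<or> \<tau> = -1"
  shows "P \<tau> a (r + 1) - q powi (\<sigma> + \<tau>) * a * P \<tau> a r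
       = q powi (\<sigma> + \<tau>) * P (- \<sigma>) a (r + 1) - a * P (- \<sigma>) a r"
proof -
  consider "r < -1" | "r = -1" | "r = 0" | "r > 0" by linarith
  then show ?thesis
  proof cases
    case 4
    then have e: "a powi (r + 1) = a * a powi r" "a powi (1 + r) = a * a powi r" using a by (simp_all add: power_int_add)
    show ?thesis using 4 sg q0 by (auto simp: P_def e field_simps power_int_minus power2_eq_square)
  qed (use sg q0 in \<open>auto simp: P_def field_simps power_int_minus power2_eq_square\<close>)
qed

lemma Qa: assumes a: "a \<noteq> 0" and sg: "\<sigma> = 1 \<or> \<sigma> = -1" "\<tau> = 1 \<or> \<tau> = -1"
  shows "Q \<tau> a (r + 1) - q powi (\<sigma> + \<tau>) * a * Q \<tau> a r
       = q powi (\<sigma> + \<tau>) * Q (- \<sigma>) a (r + 1) - a * Q (- \<sigma>) a r"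
proof -
  consider "r < -1" | "r = -1" | "r = 0" | "r > 0" by linarith
  then show ?thesis
  proof cases
    case 1
    then have e: "a powi (r + 1) = a * a powi r" "a powi (1 + r) = a * a powi r" using a by (simp_all add: power_int_add)
    show ?thesis using 1 sg q0 by (auto simp: Q_def e field_simps power_int_minus power2_eq_square)
  qed (use sg q0 a in \<open>auto simp: Q_def field_simps power_int_minus power2_eq_square\<close>)
qed


lemma Pb: assumes b: "b \<noteq> 0" and h: "a = d powi \<tau> * q powi \<tau> * b"
  shows "d powi \<tau> * P (- \<tau>) b (r + 1) - q powi (- \<tau>) * a * P (- \<tau>) b r
       = d powi \<tau> * q powi (- \<tau>) * (if r + 1 = 0 then 1 else 0) - a * (if r = 0 then 1 else 0)"
proof -
  consider "r < -1" | "r = -1" | "r = 0" | "r > 0" by linarith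
  then show ?thesis
  proof cases
    case 4
    have e: "b powi (r + 1) = b * b powi r" "b powi (1 + r) = b * b powi r" using b by (simp_all add: power_int_add)
    show ?thesis using 4 q0 d0 unfolding h by (simp add: P_def e field_simps power_int_minus)
  qed (use q0 d0 b in \<open>auto simp: h P_def field_simps power_int_minus\<close>)
qed

lemma Pc: assumes b: "b \<noteq> 0" and h: "a = d powi (- \<sigma>) * q powi (- \<sigma>) * b"
  shows "d powi (- \<sigma>) * (if r + 1 = 0 then 1 else 0) - q powi (- \<sigma>) * a * (if r = 0 then 1 else 0)
       = d powi (- \<sigma>) * q powi (- \<sigma>) * P \<sigma> b (r + 1) - a * P \<sigma> b r"
proof -
  consider "r < -1" | "r = -1" | "r = 0" | "r > 0" by linarith
  then show ?thesis
  proof cases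
    case 4
    have e: "b powi (r + 1) = b * b powi r" "b powi (1 + r) = b * b powi r" using b by (simp_all add: power_int_add)
    show ?thesis using 4 q0 d0 unfolding h by (simp add: P_def e field_simps power_int_minus)
  qed (use q0 d0 b in \<open>auto simp: h P_def field_simps power_int_minus\<close>)
qed

lemma Qb: assumes b: "b \<noteq> 0" and h: "a = d powi \<tau> * q powi \<tau> * b"
  shows "d powi \<tau> * Q (- \<tau>) b (r + 1) - q powi (- \<tau>) * a * Q (- \<tau>) b r
       = d powi \<tau> * q powi (- \<tau>) * (if r + 1 = 0 then 1 else 0) - a * (if r = 0 then 1 else 0)"
proof -
  consider "r < -1" | "r = -1" | "r = 0" | "r > 0" by linarith
  then show ?thesis
  proof cases
    case 1
    have e: "b powi (r + 1) = b * b powi r" "b powi (1 + r) = b * b powi r" using b by (simp_all add: power_int_add)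
    show ?thesis using 1 q0 d0 unfolding h by (simp add: Q_def e field_simps power_int_minus)
  qed (use q0 d0 b in \<open>auto simp: h Q_def field_simps power_int_minus\<close>)
qed

lemma Qc: assumes b: "b \<noteq> 0" and h: "a = d powi (- \<sigma>) * q powi (- \<sigma>) * b"
  shows "d powi (- \<sigma>) * (if r + 1 = 0 then 1 else 0) - q powi (- \<sigma>) * a * (if r = 0 then 1 else 0)
       = d powi (- \<sigma>) * q powi (- \<sigma>) * Q \<sigma> b (r + 1) - a * Q \<sigma> b r"
proof -
  consider "r < -1" | "r = -1" | "r = 0" | "r > 0" by linarith
  then show ?thesis
  proof cases
    case 1
    have e: "b powi (r + 1) = b * b powi r" "b powi (1 + r) = b * b powi r" using b by (simp_all add: power_int_add)
    show ?thesis using 1 q0 d0 unfolding h by (simp add: Q_def e field_simps power_int_minus)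
  qed (use q0 d0 b in \<open>auto simp: h Q_def field_simps power_int_minus\<close>)
qed

lemma av_rel1: "av l = d powi s (l + 1) * q powi s (l + 1) * av (l + 1)"
  using av_step[of l] d0 q0 by (simp add: power_int_minus power_int_mult_distrib field_simps)
lemma av_rel2: "av l = d powi (- s l) * q powi (- s l) * av (l - 1)"
  using av_step[of "l - 1"] d0 q0 by (simp add: power_int_minus power_int_mult_distrib field_simps)

lemma S3:
  assumes i: "0 \<le> i" "i < N" and j: "0 \<le> j" "j < N" and lj: "l mod N = j mod N"
  shows "d powi Mmat s N i j * kpz i (r + 1) (l + 1) - q powi Acart s N i j * av l * kpz i r (l + 1)
       = d powi Mmat s N i j * q powi Acart s N i j * kpz i (r + 1) l - av l * kpz i r l
     \<and> d powi Mmat s N i j * kmz i (r + 1) (l + 1) - q powi Acart s N i j * av l * kmz i r (l + 1)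
       = d powi Mmat s N i j * q powi Acart s N i j * kmz i (r + 1) l - av l * kmz i r l"
proof -
  have jj: "j = l mod N" using lj j by simp
  show ?thesis
  proof (rule i_cases[OF i, of l])
    assume ii: "i = l mod N"
    have v: "kpz i t (l + 1) = P (s (l + 1)) (av l) t" "kpz i t l = P (- s l) (av l) t"
            "kmz i t (l + 1) = Q (s (l + 1)) (av l) t" "kmz i t l = Q (- s l) (av l) t" for t
      unfolding ii using N3 by (simp_all add: kzsimps mdsimps mod_simps)
    have A: "Acart s N i j = s l + s (l + 1)" and M: "Mmat s N i j = 0"
      unfolding ii jj using N3 by (simp_all add: Acart_def Mmat_def mdsimps mod_simps s_mod s_mod_add)
    show ?thesis unfolding v A M using Pa[OF av_nz s_pm s_pm] Qa[OF av_nz s_pm s_pm] by simp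
  next
    assume ii: "i = (l + 1) mod N"
    have v: "kpz i t (l + 1) = P (- s (l + 1)) (av (l + 1)) t" "kpz i t l = (if t = 0 then 1 else 0)"
            "kmz i t (l + 1) = Q (- s (l + 1)) (av (l + 1)) t" "kmz i t l = (if t = 0 then 1 else 0)" for t
      unfolding ii using N3 by (simp_all add: kzsimps mdsimps mod_simps)
    have A: "Acart s N i j = - s (l + 1)" and M: "Mmat s N i j = s (l + 1)"
      unfolding ii jj using N3 by (simp_all add: Acart_def Mmat_def mdsimps mod_simps s_mod s_mod_add)
    show ?thesis unfolding v A M using Pb[OF av_nz av_rel1] Qb[OF av_nz av_rel1] by simp
  next
    assume ii: "i = (l - 1) mod N"
    have v: "kpz i t (l + 1) = (if t = 0 then 1 else 0)" "kpz i t l = P (s l) (av (l - 1)) t"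
            "kmz i t (l + 1) = (if t = 0 then 1 else 0)" "kmz i t l = Q (s l) (av (l - 1)) t" for t
      unfolding ii using N3 by (simp_all add: kzsimps mdsimps mod_simps)
    have A: "Acart s N i j = - s l" and M: "Mmat s N i j = - s l"
      unfolding ii jj using N3 by (simp_all add: Acart_def Mmat_def mdsimps mod_simps s_mod s_mod_add s_mod_diff)
    show ?thesis unfolding v A M using Pc[OF av_nz av_rel2] Qc[OF av_nz av_rel2] by simp
  next
    assume h: "i \<noteq> l mod N" "i \<noteq> (l + 1) mod N" "i \<noteq> (l - 1) mod N"
          "(i + 1) mod N \<noteq> l mod N" "(i - 1) mod N \<noteq> l mod N"
    have im: "i mod N = i" using i by simp
    have v: "kpz i t (l + 1) = (if t = 0 then 1 else 0)" "kpz i t l = (if t = 0 then 1 else 0)"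
            "kmz i t (l + 1) = (if t = 0 then 1 else 0)" "kmz i t l = (if t = 0 then 1 else 0)" for t
      using N3 h by (simp_all add: kzsimps mdsimps mod_simps im)
    have A: "Acart s N i j = 0" and M: "Mmat s N i j = 0"
      unfolding jj using N3 h by (simp_all add: Acart_def Mmat_def mdsimps mod_simps im)
    show ?thesis unfolding v A M by simp
  qed
qed

lemmas S3p = S3[THEN conjunct1] and S3m = S3[THEN conjunct2]

end

context WU
begin

lemma KZp_eq: "KZp q Kc Hc i t v = (\<lambda>k. kpz i t k * v k)"
  by (simp add: KZp_def Kplus_eq KpW_def kpz_def fun_eq_iff)
lemma KZm_eq: "KZm q Kic Hc i t v = (\<lambda>k. kmz i t k * v k)"
  by (simp add: KZm_def Kminus_eq KmW_def kmz_def fun_eq_iff)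

lemma kp0_kpz: "kp i 0 x = kpz i 0 x" by (simp add: kpz_def)
lemma km0_kmz: "km i 0 x = kmz i 0 x" by (simp add: kmz_def)

lemma kpz_shift:
  assumes i: "0 \<le> i" "i < N" and j: "0 \<le> j" "j < N" and lj: "l mod N = j mod N"
  shows "kpz i 0 (l + 1) = q powi Acart s N i j * kpz i 0 l"
  using S3p[OF i j lj, of "-1"] d0 by (simp add: kpz_def)

lemma kpz0_km: "kpz i 0 x * kmz i 0 x = 1"
  using kpkm0 by (simp add: kpz_def kmz_def)

lemma rel3E:
  assumes i: "0 \<le> i" "i < N" and j: "0 \<le> j" "j < N"
    and KZ: "KZ \<in> {KZp q Kc Hc, KZm q Kic Hc}"
  shows "vsc (d powi Mmat s N i j) (KZ i (r + 1) (E j k v)) - vsc (q powi Acart s N i j) (KZ i r (E j (k + 1) v))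
            = vsc (d powi Mmat s N i j * q powi Acart s N i j) (E j k (KZ i (r + 1) v)) - E j (k + 1) (KZ i r v)"
proof (rule ext)
  fix x
  show "(vsc (d powi Mmat s N i j) (KZ i (r + 1) (E j k v)) - vsc (q powi Acart s N i j) (KZ i r (E j (k + 1) v))) x
      = (vsc (d powi Mmat s N i j * q powi Acart s N i j) (E j k (KZ i (r + 1) v)) - E j (k + 1) (KZ i r v)) x"
  proof (cases "(x - 1) mod N = j mod N")
    case False
    then show ?thesis using KZ by (auto simp: KZp_eq KZm_eq Eop_def vsc_def)
  next
    case True
    define l where "l = x - 1"
    have x: "x = l + 1" by (simp add: l_def)
    have lj: "l mod N = j mod N" using True by (simp add: l_def)
    have pw: "av l powi (k + 1) = av l * av l powi k" "av l powi (1 + k) = av l * av l powi k" using av_nz by (simp_all add: power_int_add)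
    from KZ show ?thesis
    proof
      assume "KZ = KZp q Kc Hc"
      then show ?thesis
        using arg_cong[OF S3p[OF i j lj, of r], of "\<lambda>z. z * (av l powi k * v l)"] lj
        unfolding x by (simp add: KZp_eq Eop_def vsc_def pw algebra_simps)
    next
      assume "KZ \<in> {KZm q Kic Hc}"
      then show ?thesis
        using arg_cong[OF S3m[OF i j lj, of r], of "\<lambda>z. z * (av l powi k * v l)"] lj
        unfolding x by (simp add: KZm_eq Eop_def vsc_def pw algebra_simps)
    qed
  qed
qed

lemma flip_aux:
  fixes D Qa Qi a Y0 Y1 Z0 Z1 :: complex
  assumes "Qa * Qi = 1" and "D * Y1 - Qa * a * Z1 = D * Qa * Y0 - a * Z0"
  shows "D * Y0 - Qi * a * Z0 = D * Qi * Y1 - a * Z1"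
proof -
  have "Qi * (D * Y1 - Qa * a * Z1) = Qi * (D * Qa * Y0 - a * Z0)" using assms(2) by simp
  then have "D * Qi * Y1 - (Qa * Qi) * a * Z1 = D * (Qa * Qi) * Y0 - Qi * a * Z0" by (simp add: algebra_simps)
  then show ?thesis using assms(1) by simp
qed

lemma S3Fp:
  assumes i: "0 \<le> i" "i < N" and j: "0 \<le> j" "j < N" and lj: "l mod N = j mod N"
  shows "d powi Mmat s N i j * kpz i (r + 1) l - q powi (- Acart s N i j) * av l * kpz i r l
       = d powi Mmat s N i j * q powi (- Acart s N i j) * kpz i (r + 1) (l + 1) - av l * kpz i r (l + 1)"
  by (rule flip_aux[OF _ S3p[OF i j lj]]) (simp add: q0 power_int_minus)

lemma S3Fm:
  assumes i: "0 \<le> i" "i < N" and j: "0 \<le> j" "j < N" and lj: "l mod N = j mod N"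
  shows "d powi Mmat s N i j * kmz i (r + 1) l - q powi (- Acart s N i j) * av l * kmz i r l
       = d powi Mmat s N i j * q powi (- Acart s N i j) * kmz i (r + 1) (l + 1) - av l * kmz i r (l + 1)"
  by (rule flip_aux[OF _ S3m[OF i j lj]]) (simp add: q0 power_int_minus)

lemma rel3F:
  assumes i: "0 \<le> i" "i < N" and j: "0 \<le> j" "j < N"
    and KZ: "KZ \<in> {KZp q Kc Hc, KZm q Kic Hc}"
  shows "vsc (d powi Mmat s N i j) (KZ i (r + 1) (F j k v)) - vsc (q powi (- Acart s N i j)) (KZ i r (F j (k + 1) v))
            = vsc (d powi Mmat s N i j * q powi (- Acart s N i j)) (F j k (KZ i (r + 1) v)) - F j (k + 1) (KZ i r v)"
proof (rule ext)
  fix x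
  show "(vsc (d powi Mmat s N i j) (KZ i (r + 1) (F j k v)) - vsc (q powi (- Acart s N i j)) (KZ i r (F j (k + 1) v))) x
      = (vsc (d powi Mmat s N i j * q powi (- Acart s N i j)) (F j k (KZ i (r + 1) v)) - F j (k + 1) (KZ i r v)) x"
  proof (cases "x mod N = j mod N")
    case False
    then show ?thesis using KZ by (auto simp: KZp_eq KZm_eq Fop_def vsc_def)
  next
    case True
    have pw: "av x powi (k + 1) = av x * av x powi k" "av x powi (1 + k) = av x * av x powi k" using av_nz by (simp_all add: power_int_add)
    from KZ show ?thesis
    proof
      assume "KZ = KZp q Kc Hc"
      then show ?thesis
        using arg_cong[OF S3Fp[OF i j True, of r], of "\<lambda>z. z * (of_int (s (x + 1)) * av x powi k * v (x + 1))"] True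
        by (simp add: KZp_eq Fop_def vsc_def pw algebra_simps)
    next
      assume "KZ \<in> {KZm q Kic Hc}"
      then show ?thesis
        using arg_cong[OF S3Fm[OF i j True, of r], of "\<lambda>z. z * (of_int (s (x + 1)) * av x powi k * v (x + 1))"] True
        by (simp add: KZm_eq Fop_def vsc_def pw algebra_simps)
    qed
  qed
qed

lemma rel1E:
  assumes i: "0 \<le> i" "i < N" and j: "0 \<le> j" "j < N"
  shows "Kc i (E j r (Kic i v)) = vsc (q powi Acart s N i j) (E j r v)"
proof (rule ext)
  fix x
  show "Kc i (E j r (Kic i v)) x = vsc (q powi Acart s N i j) (E j r v) x"
  proof (cases "(x - 1) mod N = j mod N")
    case True
    define l where "l = x - 1"
    have x: "x = l + 1" by (simp add: l_def)
    have lj: "l mod N = j mod N" using True by (simp add: l_def)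
    show ?thesis using kpz_shift[OF i j lj] kpz0_km[of i l] lj unfolding x
      by (simp add: Kc_def Kic_def dg_def Eop_def vsc_def kp0_kpz km0_kmz algebra_simps)
  qed (simp add: Kc_def Kic_def dg_def Eop_def vsc_def)
qed

lemma rel1F:
  assumes i: "0 \<le> i" "i < N" and j: "0 \<le> j" "j < N"
  shows "Kc i (F j r (Kic i v)) = vsc (q powi (- Acart s N i j)) (F j r v)"
proof (rule ext)
  fix x
  show "Kc i (F j r (Kic i v)) x = vsc (q powi (- Acart s N i j)) (F j r v) x"
  proof (cases "x mod N = j mod N")
    case True
    have e: "kpz i 0 x * kmz i 0 (x + 1) = q powi (- Acart s N i j)"
    proof -
      have "kpz i 0 (x + 1) * kmz i 0 (x + 1) = 1" by (rule kpz0_km)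
      then have "q powi Acart s N i j * (kpz i 0 x * kmz i 0 (x + 1)) = 1"
        using kpz_shift[OF i j True] by (simp add: algebra_simps)
      then show ?thesis using q0 by (simp add: power_int_minus field_simps)
    qed
    show ?thesis using e True
      by (simp add: Kc_def Kic_def dg_def Fop_def vsc_def kp0_kpz km0_kmz algebra_simps)
  qed (simp add: Kc_def Kic_def dg_def Fop_def vsc_def)
qed

lemma PQdiff: assumes "\<sigma> = 1 \<or> \<sigma> = -1" and "a \<noteq> 0"
  shows "P \<sigma> a t - Q \<sigma> a t = of_int \<sigma> * (q - inverse q) * a powi t"
  using assms q0 by (auto simp: P_def Q_def power_int_minus field_simps)

lemma deg_sign: "(-1::complex) powi (deg s x * deg s x) * of_int (s (x + 1)) = of_int (s x)"
  using s_pm[of x] s_pm[of "x + 1"] by (auto simp: deg_def)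

lemma rel4:
  assumes i: "0 \<le> i" "i < N" and j: "0 \<le> j" "j < N"
  shows "E i a (F j b v) - vsc ((-1) powi (deg s i * deg s j)) (F j b (E i a v))
      = (if i = j then vsc (1 / (q - inverse q)) (KZp q Kc Hc i (a + b) v - KZm q Kic Hc i (a + b) v) else 0)"
proof (cases "i = j")
  case False
  have ne: "i mod N \<noteq> j mod N" using i j False by simp
  show ?thesis
  proof (rule ext)
    fix x
    show "(E i a (F j b v) - vsc ((-1) powi (deg s i * deg s j)) (F j b (E i a v))) x
          = (if i = j then vsc (1 / (q - inverse q)) (KZp q Kc Hc i (a + b) v - KZm q Kic Hc i (a + b) v) else 0) x"
      using ne False by (auto simp: Eop_def Fop_def vsc_def)
  qed
next
  case True
  then have ji: "j = i" by simp
  show ?thesis unfolding ji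
  proof (rule ext)
    fix x
    have pw: "av y powi a * av y powi b = av y powi (a + b)" for y using av_nz by (simp add: power_int_add)
    have R: "(vsc (1 / (q - inverse q)) (KZp q Kc Hc i (a + b) v - KZm q Kic Hc i (a + b) v)) x
          = (kpz i (a + b) x - kmz i (a + b) x) / (q - inverse q) * v x"
      by (simp add: vsc_def KZp_eq KZm_eq diff_divide_distrib algebra_simps)
    consider "x mod N = i mod N" | "(x - 1) mod N = i mod N" "x mod N \<noteq> i mod N"
      | "x mod N \<noteq> i mod N" "(x - 1) mod N \<noteq> i mod N" by blast
    then show "(E i a (F i b v) - vsc ((-1) powi (deg s i * deg s i)) (F i b (E i a v))) x
          = (if i = i then vsc (1 / (q - inverse q)) (KZp q Kc Hc i (a + b) v - KZm q Kic Hc i (a + b) v) else 0) x"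
    proof cases
      case 1
      have n1: "(x - 1) mod N \<noteq> i mod N"
      proof
        assume "(x - 1) mod N = i mod N"
        with 1 have "(x - 1) mod N = x mod N" by simp
        then show False using N3 by (simp add: mdsimps)
      qed
      have si: "s i = s x" "s (i + 1) = s (x + 1)" using 1 by (metis s_cong, metis s_cong mod_add_left_eq)
      have dd: "deg s i = deg s x" by (simp add: deg_def si)
      have pq: "P (- s x) (av x) (a + b) - Q (- s x) (av x) (a + b) = of_int (- s x) * (q - inverse q) * av x powi (a + b)"
        using s_pm[of x] av_nz by (intro PQdiff) auto
      have L: "(E i a (F i b v) - vsc ((-1) powi (deg s i * deg s i)) (F i b (E i a v))) x
             = - ((-1) powi (deg s x * deg s x) * of_int (s (x + 1))) * av x powi (a + b) * v x"
        using 1 n1 by (simp add: Eop_def Fop_def vsc_def dd pw[symmetric] algebra_simps)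
      have R2: "(kpz i (a + b) x - kmz i (a + b) x) / (q - inverse q) * v x = - of_int (s x) * av x powi (a + b) * v x"
        using 1 pq qinv_ne by (simp add: kzsimps)
      show ?thesis using L R R2 deg_sign[of x] by simp
    next
      case 2
      have pq: "P (s x) (av (x - 1)) (a + b) - Q (s x) (av (x - 1)) (a + b) = of_int (s x) * (q - inverse q) * av (x - 1) powi (a + b)"
        using s_pm[of x] av_nz by (intro PQdiff) auto
      have L: "(E i a (F i b v) - vsc ((-1) powi (deg s i * deg s i)) (F i b (E i a v))) x
             = of_int (s x) * av (x - 1) powi (a + b) * v x"
        using 2 by (simp add: Eop_def Fop_def vsc_def pw[symmetric] algebra_simps)
      have R2: "(kpz i (a + b) x - kmz i (a + b) x) / (q - inverse q) * v x = of_int (s x) * av (x - 1) powi (a + b) * v x"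
        using 2 pq qinv_ne by (simp add: kzsimps)
      show ?thesis using L R R2 by simp
    next
      case 3
      have L: "(E i a (F i b v) - vsc ((-1) powi (deg s i * deg s i)) (F i b (E i a v))) x = 0"
        using 3 by (simp add: Eop_def Fop_def vsc_def)
      have R2: "(kpz i (a + b) x - kmz i (a + b) x) / (q - inverse q) * v x = 0"
        using 3 by (simp add: kzsimps)
      show ?thesis using L R R2 by simp
    qed
  qed
qed

lemma A_adj1:
  assumes i: "0 \<le> i" "i < N" and h: "i mod N = (j + 1) mod N"
  shows "Acart s N i j = - s (j + 1)" "Mmat s N i j = s (j + 1)"
proof -
  have ii: "i = (j + 1) mod N" using i h by simp
  show "Acart s N i j = - s (j + 1)" "Mmat s N i j = s (j + 1)"
    unfolding ii using N3 by (simp_all add: Acart_def Mmat_def mdsimps mod_simps s_mod)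
qed

lemma A_adj2:
  assumes j: "0 \<le> j" "j < N" and h: "j mod N = (i + 1) mod N"
  shows "Acart s N i j = - s (i + 1)" "Mmat s N i j = - s (i + 1)"
proof -
  have jj: "j = (i + 1) mod N" using j h by simp
  show "Acart s N i j = - s (i + 1)" "Mmat s N i j = - s (i + 1)"
    unfolding jj using N3 by (simp_all add: Acart_def Mmat_def mdsimps mod_simps s_mod)
qed

lemma cong_m1: "i mod N = (j - 1) mod N \<longleftrightarrow> j mod N = (i + 1) mod N"
proof
  assume "i mod N = (j - 1) mod N"
  then have "(i + 1) mod N = (j - 1 + 1) mod N" by (metis mod_add_left_eq)
  then show "j mod N = (i + 1) mod N" by simp
next
  assume "j mod N = (i + 1) mod N"
  then have "(j - 1) mod N = (i + 1 - 1) mod N" by (metis mod_diff_left_eq)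
  then show "i mod N = (j - 1) mod N" by simp
qed

lemma adj_excl: "i mod N = (j + 1) mod N \<Longrightarrow> j mod N = (i + 1) mod N \<Longrightarrow> False"
proof -
  assume h1: "i mod N = (j + 1) mod N" and h2: "j mod N = (i + 1) mod N"
  from h1 have "(i + 1) mod N = (j + 1 + 1) mod N" by (metis mod_add_left_eq)
  with h2 have "j mod N = (j + 1 + 1) mod N" by simp
  then show False using N3 by (simp add: mdsimps)
qed

lemma rel5_zero:
  assumes i: "0 \<le> i" "i < N" and j: "0 \<le> j" "j < N" and A: "Acart s N i j = 0"
  shows "E i a (E j b v) - vsc c (E j b (E i a v)) = 0 \<and> F i a (F j b v) - vsc c (F j b (F i a v)) = 0"
proof -
  have n1: "i mod N \<noteq> (j + 1) mod N"
    using A_adj1[OF i] A s_pm[of "j + 1"] by force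
  have n2: "j mod N \<noteq> (i + 1) mod N"
    using A_adj2[OF j] A s_pm[of "i + 1"] by force
  have n3: "i mod N \<noteq> (j - 1) mod N" using n2 cong_m1 by blast
  have n4: "j mod N \<noteq> (i - 1) mod N" using n1 cong_m1 by blast
  show ?thesis using n1 n2 n3 n4 by (simp add: EE_zero FF_zero vsc_0)
qed

lemma EE_pt: "E x a (E y b v) k = (if (k - 1) mod N = x mod N \<and> (k - 2) mod N = y mod N
     then av (k - 1) powi a * av (k - 2) powi b * v (k - 2) else 0)"
  by (simp add: Eop_def)

lemma FF_pt: "F x a (F y b v) k = (if k mod N = x mod N \<and> (k + 1) mod N = y mod N
     then of_int (s (k + 1)) * av k powi a * (of_int (s (k + 1 + 1)) * av (k + 1) powi b * v (k + 1 + 1)) else 0)"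
  by (simp add: Fop_def)

lemma av_relA: "d powi s (l + 1) * av (l + 1) = q powi (- s (l + 1)) * av l"
  using av_step[of l] d0 q0 by (simp add: power_int_minus power_int_mult_distrib field_simps)
lemma av_relB: "d powi (- s (l + 1)) * q powi (- s (l + 1)) * av l = av (l + 1)"
  using av_step[of l] d0 q0 by (simp add: power_int_minus power_int_mult_distrib field_simps)

lemma rel5E:
  assumes i: "0 \<le> i" "i < N" and j: "0 \<le> j" "j < N"
  shows "vsc (d powi Mmat s N i j) (E i (a + 1) (E j b v)) - vsc (q powi Acart s N i j) (E i a (E j (b + 1) v))
            = vsc c (vsc (d powi Mmat s N i j * q powi Acart s N i j) (E j b (E i (a + 1) v)) - E j (b + 1) (E i a v))"
proof -
  have pwa: "av y powi (a + 1) = av y * av y powi a" "av y powi (b + 1) = av y * av y powi b" for y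
    using av_nz by (simp_all add: power_int_add)
  consider "i mod N = (j + 1) mod N" | "j mod N = (i + 1) mod N"
    | "i mod N \<noteq> (j + 1) mod N" "j mod N \<noteq> (i + 1) mod N" by blast
  then show ?thesis
  proof cases
    case 1
    have n2: "j mod N \<noteq> (i + 1) mod N" using 1 adj_excl by blast
    have L: "vsc (d powi Mmat s N i j) (E i (a + 1) (E j b v)) - vsc (q powi Acart s N i j) (E i a (E j (b + 1) v)) = 0"
    proof (rule ext)
      fix x
      show "(vsc (d powi Mmat s N i j) (E i (a + 1) (E j b v)) - vsc (q powi Acart s N i j) (E i a (E j (b + 1) v))) x = 0 x"
      proof (cases "(x - 1) mod N = i mod N \<and> (x - 2) mod N = j mod N")
        case True
        define l where "l = x - 2"
        have x1: "x - 1 = l + 1" and x2: "x - 2 = l" by (simp_all add: l_def)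
        have lj: "l mod N = j mod N" using True by (simp add: l_def)
        have sj: "s (j + 1) = s (l + 1)" using lj by (metis s_cong mod_add_left_eq)
        have e1: "(vsc (d powi Mmat s N i j) (E i (a + 1) (E j b v)) - vsc (q powi Acart s N i j) (E i a (E j (b + 1) v))) x
          = d powi s (l + 1) * (av (l + 1) powi (a + 1) * av l powi b * v l) - q powi (- s (l + 1)) * (av (l + 1) powi a * av l powi (b + 1) * v l)"
          using True by (simp add: EE_pt vsc_def A_adj1[OF i 1] sj x1 x2)
        also have "\<dots> = (av (l + 1) powi a * av l powi b * v l) * (d powi s (l + 1) * av (l + 1) - q powi (- s (l + 1)) * av l)"
          by (simp only: pwa) (simp add: algebra_simps)
        also have "\<dots> = 0" using av_relA[of l] by simp
        finally show ?thesis by simp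
      qed (auto simp: EE_pt vsc_def)
    qed
    show ?thesis using n2 by (simp add: L EE_zero vsc_0)
  next
    case 2
    have n1: "i mod N \<noteq> (j + 1) mod N" using 2 adj_excl by blast
    have R: "vsc (d powi Mmat s N i j * q powi Acart s N i j) (E j b (E i (a + 1) v)) - E j (b + 1) (E i a v) = 0"
    proof (rule ext)
      fix x
      show "(vsc (d powi Mmat s N i j * q powi Acart s N i j) (E j b (E i (a + 1) v)) - E j (b + 1) (E i a v)) x = 0 x"
      proof (cases "(x - 1) mod N = j mod N \<and> (x - 2) mod N = i mod N")
        case True
        define l where "l = x - 2"
        have x1: "x - 1 = l + 1" and x2: "x - 2 = l" by (simp_all add: l_def)
        have li: "l mod N = i mod N" using True by (simp add: l_def)
        have si: "s (i + 1) = s (l + 1)" using li by (metis s_cong mod_add_left_eq)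
        have e1: "(vsc (d powi Mmat s N i j * q powi Acart s N i j) (E j b (E i (a + 1) v)) - E j (b + 1) (E i a v)) x
          = d powi (- s (l + 1)) * q powi (- s (l + 1)) * (av (l + 1) powi b * av l powi (a + 1) * v l) - av (l + 1) powi (b + 1) * av l powi a * v l"
          using True by (simp add: EE_pt vsc_def A_adj2[OF j 2] si x1 x2)
        also have "\<dots> = (av (l + 1) powi b * av l powi a * v l) * (d powi (- s (l + 1)) * q powi (- s (l + 1)) * av l - av (l + 1))"
          by (simp only: pwa) (simp add: algebra_simps)
        also have "\<dots> = 0" using av_relB[of l] by simp
        finally show ?thesis by simp
      qed (auto simp: EE_pt vsc_def)
    qed
    show ?thesis using n1 by (simp add: R EE_zero vsc_0)
  next
    case 3
    then show ?thesis by (simp add: EE_zero vsc_0)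
  qed
qed

lemma rel5F:
  assumes i: "0 \<le> i" "i < N" and j: "0 \<le> j" "j < N"
  shows "vsc (d powi Mmat s N i j) (F i (a + 1) (F j b v)) - vsc (q powi (- Acart s N i j)) (F i a (F j (b + 1) v))
            = vsc c (vsc (d powi Mmat s N i j * q powi (- Acart s N i j)) (F j b (F i (a + 1) v)) - F j (b + 1) (F i a v))"
proof -
  have pwa: "av y powi (a + 1) = av y * av y powi a" "av y powi (b + 1) = av y * av y powi b" for y
    using av_nz by (simp_all add: power_int_add)
  consider "j mod N = (i + 1) mod N" | "i mod N = (j + 1) mod N"
    | "i mod N \<noteq> (j + 1) mod N" "j mod N \<noteq> (i + 1) mod N" by blast
  then show ?thesis
  proof cases
    case 1
    have n2: "i mod N \<noteq> (j + 1) mod N" using 1 adj_excl by blast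
    have n4: "j mod N \<noteq> (i - 1) mod N" using n2 cong_m1 by blast
    have L: "vsc (d powi Mmat s N i j) (F i (a + 1) (F j b v)) - vsc (q powi (- Acart s N i j)) (F i a (F j (b + 1) v)) = 0"
    proof (rule ext)
      fix x
      show "(vsc (d powi Mmat s N i j) (F i (a + 1) (F j b v)) - vsc (q powi (- Acart s N i j)) (F i a (F j (b + 1) v))) x = 0 x"
      proof (cases "x mod N = i mod N \<and> (x + 1) mod N = j mod N")
        case True
        have si: "s (i + 1) = s (x + 1)" using True by (metis s_cong mod_add_left_eq)
        have e: "d powi (- s (x + 1)) * av x = q powi (s (x + 1)) * av (x + 1)"
          using av_relB[of x] q0 d0 by (simp add: power_int_minus field_simps)
        have e1: "(vsc (d powi Mmat s N i j) (F i (a + 1) (F j b v)) - vsc (q powi (- Acart s N i j)) (F i a (F j (b + 1) v))) x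
          = d powi (- s (x + 1)) * (of_int (s (x + 1)) * av x powi (a + 1) * (of_int (s (x + 1 + 1)) * av (x + 1) powi b * v (x + 1 + 1)))
            - q powi (- (- s (x + 1))) * (of_int (s (x + 1)) * av x powi a * (of_int (s (x + 1 + 1)) * av (x + 1) powi (b + 1) * v (x + 1 + 1)))"
          using True by (simp add: FF_pt vsc_def A_adj2[OF j 1] si)
        also have "\<dots> = (of_int (s (x + 1)) * av x powi a * of_int (s (x + 1 + 1)) * av (x + 1) powi b * v (x + 1 + 1))
             * (d powi (- s (x + 1)) * av x - q powi (s (x + 1)) * av (x + 1))"
          by (simp only: pwa minus_minus) (simp add: algebra_simps)
        also have "\<dots> = 0" using e by simp
        finally show ?thesis by simp
      qed (auto simp: FF_pt vsc_def)
    qed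
    show ?thesis using n4 by (simp add: L FF_zero vsc_0)
  next
    case 2
    have n1: "j mod N \<noteq> (i + 1) mod N" using 2 adj_excl by blast
    have n3: "i mod N \<noteq> (j - 1) mod N" using n1 cong_m1 by blast
    have R: "vsc (d powi Mmat s N i j * q powi (- Acart s N i j)) (F j b (F i (a + 1) v)) - F j (b + 1) (F i a v) = 0"
    proof (rule ext)
      fix x
      show "(vsc (d powi Mmat s N i j * q powi (- Acart s N i j)) (F j b (F i (a + 1) v)) - F j (b + 1) (F i a v)) x = 0 x"
      proof (cases "x mod N = j mod N \<and> (x + 1) mod N = i mod N")
        case True
        have sj: "s (j + 1) = s (x + 1)" using True by (metis s_cong mod_add_left_eq)
        have e: "d powi s (x + 1) * q powi s (x + 1) * av (x + 1) = av x"
          using av_rel1[of x] by simp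
        have e1: "(vsc (d powi Mmat s N i j * q powi (- Acart s N i j)) (F j b (F i (a + 1) v)) - F j (b + 1) (F i a v)) x
          = d powi s (x + 1) * q powi (- (- s (x + 1))) * (of_int (s (x + 1)) * av x powi b * (of_int (s (x + 1 + 1)) * av (x + 1) powi (a + 1) * v (x + 1 + 1)))
            - of_int (s (x + 1)) * av x powi (b + 1) * (of_int (s (x + 1 + 1)) * av (x + 1) powi a * v (x + 1 + 1))"
          using True by (simp add: FF_pt vsc_def A_adj1[OF i 2] sj)
        also have "\<dots> = (of_int (s (x + 1)) * av x powi b * of_int (s (x + 1 + 1)) * av (x + 1) powi a * v (x + 1 + 1))
             * (d powi s (x + 1) * q powi s (x + 1) * av (x + 1) - av x)"
          by (simp only: pwa minus_minus) (simp add: algebra_simps)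
        also have "\<dots> = 0" using e by simp
        finally show ?thesis by simp
      qed (auto simp: FF_pt vsc_def)
    qed
    show ?thesis using n3 by (simp add: R FF_zero vsc_0)
  next
    case 3
    have n3: "i mod N \<noteq> (j - 1) mod N" using 3 cong_m1 by blast
    have n4: "j mod N \<noteq> (i - 1) mod N" using 3 cong_m1 by blast
    show ?thesis using n3 n4 by (simp add: FF_zero vsc_0)
  qed
qed

end

context WU
begin

lemma finite_shift: "finite {j. v j \<noteq> (0::complex)} \<Longrightarrow> finite {k::int. v (k + c) \<noteq> 0}"
proof -
  assume f: "finite {j. v j \<noteq> (0::complex)}"
  have "{k. v (k + c) \<noteq> 0} = (\<lambda>j. j - c) ` {j. v j \<noteq> 0}"
    by (auto simp: image_iff intro!: exI[of _ "_ + c"])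
  then show ?thesis using f by simp
qed

lemma E_W: "v \<in> Wspace \<Longrightarrow> E i r v \<in> Wspace"
proof -
  assume "v \<in> Wspace"
  then have "finite {k. v (k + (-1)) \<noteq> 0}" by (intro finite_shift) (simp add: Wspace_def)
  then show ?thesis unfolding Wspace_def mem_Collect_eq
    by (rule rev_finite_subset) (auto simp: Eop_def)
qed

lemma F_W: "v \<in> Wspace \<Longrightarrow> F i r v \<in> Wspace"
proof -
  assume "v \<in> Wspace"
  then have "finite {k. v (k + 1) \<noteq> 0}" by (intro finite_shift) (simp add: Wspace_def)
  then show ?thesis unfolding Wspace_def mem_Collect_eq
    by (rule rev_finite_subset) (auto simp: Fop_def)
qed

lemma dg_W: "v \<in> Wspace \<Longrightarrow> dg h v \<in> Wspace"
  unfolding Wspace_def by (auto simp: dg_def elim!: rev_finite_subset)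

lemma lin_E: "lin_on Wspace (E i r)"
  by (simp add: lin_on_def E_W E_add E_vsc)
lemma lin_F: "lin_on Wspace (F i r)"
  by (simp add: lin_on_def F_W F_add F_vsc)
lemma lin_dg: "lin_on Wspace (dg h)"
  unfolding lin_on_def using dg_W by (auto simp: dg_def vsc_def fun_eq_iff algebra_simps)

lemma par_dg: "has_parity s 0 (dg h)"
  unfolding has_parity_def Wpar_def using dg_W by (auto simp: dg_def)

lemma vpar_step: "p \<in> {0, 1} \<Longrightarrow> vpar s x = p \<Longrightarrow> vpar s (x + 1) = (p + deg s x) mod 2"
  using s_pm[of x] s_pm[of "x + 1"] by (auto simp: vpar_def deg_def)

lemma par_E: assumes i: "0 \<le> i" "i < N" shows "has_parity s (deg s i) (E i r)"
  unfolding has_parity_def Wpar_def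
proof (intro ballI CollectI conjI allI impI)
  fix p v k
  assume p: "p \<in> {0, 1::int}" and v: "v \<in> {v \<in> Wspace. \<forall>j. v j \<noteq> 0 \<longrightarrow> vpar s j = p}"
  show "E i r v \<in> Wspace" using v E_W by blast
  assume nz: "E i r v k \<noteq> 0"
  then have c: "(k - 1) mod N = i mod N" and "v (k - 1) \<noteq> 0" by (auto simp: Eop_def split: if_splits)
  then have "vpar s (k - 1) = p" using v by blast
  then have "vpar s (k - 1 + 1) = (p + deg s (k - 1)) mod 2" using vpar_step p by blast
  moreover have "deg s (k - 1) = deg s i"
  proof -
    have "(k - 1 + 1) mod N = (i + 1) mod N" using c by (metis mod_add_left_eq)
    then show ?thesis using s_cong[OF c] s_cong[of "k - 1 + 1" "i + 1"] by (simp add: deg_def)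
  qed
  ultimately show "vpar s k = (p + deg s i) mod 2" by simp
qed

lemma par_F: assumes i: "0 \<le> i" "i < N" shows "has_parity s (deg s i) (F i r)"
  unfolding has_parity_def Wpar_def
proof (intro ballI CollectI conjI allI impI)
  fix p v k
  assume p: "p \<in> {0, 1::int}" and v: "v \<in> {v \<in> Wspace. \<forall>j. v j \<noteq> 0 \<longrightarrow> vpar s j = p}"
  show "F i r v \<in> Wspace" using v F_W by blast
  assume nz: "F i r v k \<noteq> 0"
  then have c: "k mod N = i mod N" and "v (k + 1) \<noteq> 0" by (auto simp: Fop_def split: if_splits)
  then have vp: "vpar s (k + 1) = p" using v by blast
  have dk: "deg s k = deg s i"
  proof -
    have "(k + 1) mod N = (i + 1) mod N" using c by (metis mod_add_left_eq)
    then show ?thesis using s_cong[OF c] s_cong[of "k + 1" "i + 1"] by (simp add: deg_def)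
  qed
  have "vpar s (k + 1) = (vpar s k + deg s k) mod 2"
    using vpar_step[of "vpar s k" k] s_pm[of k] by (auto simp: vpar_def)
  then have "p = (vpar s k + deg s k) mod 2" using vp by simp
  then show "vpar s k = (p + deg s i) mod 2"
    using s_pm[of k] s_pm[of "k + 1"] dk by (auto simp: vpar_def deg_def)
qed

lemma Aii: "Acart s N i i = s i + s (i + 1)"
  using N3 by (simp add: Acart_def mdsimps)

lemma card_S: "card {k \<in> {0..<N}. s k = 1} = m"
  using ps Ndef by (simp add: parity_seq_def)

lemma mn2_N3: "m * n = 2 \<Longrightarrow> N = 3"
proof -
  assume h: "m * n = 2"
  then have "m dvd 2" by (metis dvd_triv_left)
  then have "m \<le> 2" by (rule dvd_imp_le) simp
  then consider "m = 0" | "m = 1" | "m = 2" by linarith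
  then show "N = 3"
  proof cases
    case 1 then show ?thesis using h by simp
  next
    case 2 then have "n = 2" using h by simp
    then show ?thesis using 2 Ndef by simp
  next
    case 3 then have "n = 1" using h by simp
    then show ?thesis using 3 Ndef by simp
  qed
qed

lemma serre2_N4: "m * n \<noteq> 2 \<Longrightarrow> Acart s N i i = 0 \<Longrightarrow> N \<ge> 4"
proof (rule ccontr)
  assume mn2: "m * n \<noteq> 2" and A0: "Acart s N i i = 0" and "\<not> N \<ge> 4"
  then have N3': "N = 3" using N3 by simp
  have si: "s (i + 1) = - s i" using A0 Aii s_pm[of i] s_pm[of "i + 1"] by auto
  let ?S = "{k \<in> {0..<N}. s k = 1}"
  have fin: "finite ?S" by (rule finite_subset[of _ "{0..<N}"]) auto
  have a: "i mod N \<in> {0..<N}" "(i + 1) mod N \<in> {0..<N}" using Npos by auto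
  have sa: "s (i mod N) = s i" "s ((i + 1) mod N) = s (i + 1)" by (simp_all add: s_mod)
  have ne: "?S \<noteq> {}"
  proof (cases "s i = 1")
    case True then have "i mod N \<in> ?S" using a sa by simp
    then show ?thesis by blast
  next
    case False then have "s (i + 1) = 1" using si s_pm[of i] by simp
    then have "(i + 1) mod N \<in> ?S" using a sa by simp
    then show ?thesis by blast
  qed
  have notall: "?S \<noteq> {0..<N}"
  proof (cases "s i = 1")
    case True then have "s (i + 1) \<noteq> 1" using si by simp
    then have "(i + 1) mod N \<notin> ?S" using sa by simp
    then show ?thesis using a by blast
  next
    case False then have "i mod N \<notin> ?S" using sa by simp
    then show ?thesis using a by blast
  qed
  have "card ?S \<ge> 1" using ne fin by (simp add: Suc_le_eq card_gt_0_iff)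
  moreover have "card ?S < card {0..<N}"
    using notall by (intro psubset_card_mono) auto
  ultimately have "1 \<le> m" "m < 3" using card_S N3' by auto
  moreover have "m + n = 3" using N3' Ndef by simp
  ultimately have "m * n = 2"
  proof -
    assume h: "1 \<le> m" "m < 3" "m + n = 3"
    then consider "m = 1" | "m = 2" by linarith
    then show ?thesis
    proof cases
      case 1 then have "n = 2" using h by simp
      then show ?thesis using 1 by simp
    next
      case 2 then have "n = 1" using h by simp
      then show ?thesis using 2 by simp
    qed
  qed
  then show False using mn2 by simp
qed

end

context WU
begin

lemma conj5: "(\<forall>i\<in>{0..<N}. \<forall>j\<in>{0..<N}. \<forall>v\<in>Wspace.
       
       Kc i (Kc j v) = Kc j (Kc i v) \<and>
       (\<forall>r. Kc i (E j r (Kic i v)) = vsc (q powi Acart s N i j) (E j r v)) \<and>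
       (\<forall>r. Kc i (F j r (Kic i v)) = vsc (q powi (- Acart s N i j)) (F j r v)) \<and>
       
       (\<forall>a b. Kplus q Kc Hc i a (Kplus q Kc Hc j b v) = Kplus q Kc Hc j b (Kplus q Kc Hc i a v) \<and> Kminus q Kic Hc i a (Kminus q Kic Hc j b v) = Kminus q Kic Hc j b (Kminus q Kic Hc i a v)
              \<and> Kminus q Kic Hc i a (Kplus q Kc Hc j b v) = Kplus q Kc Hc j b (Kminus q Kic Hc i a v)) \<and>
       
       (\<forall>KZ\<in>{KZp q Kc Hc, KZm q Kic Hc}. \<forall>r k.
          vsc (d powi Mmat s N i j) (KZ i (r + 1) (E j k v)) - vsc (q powi Acart s N i j) (KZ i r (E j (k + 1) v))
            = vsc (d powi Mmat s N i j * q powi Acart s N i j) (E j k (KZ i (r + 1) v)) - E j (k + 1) (KZ i r v) \<and>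
          vsc (d powi Mmat s N i j) (KZ i (r + 1) (F j k v)) - vsc (q powi (- Acart s N i j)) (KZ i r (F j (k + 1) v))
            = vsc (d powi Mmat s N i j * q powi (- Acart s N i j)) (F j k (KZ i (r + 1) v)) - F j (k + 1) (KZ i r v)) \<and>
       
       (\<forall>a b. E i a (F j b v) - vsc ((-1) powi (deg s i * deg s j)) (F j b (E i a v))
          = (if i = j then vsc (1 / (q - inverse q)) (KZp q Kc Hc i (a + b) v - KZm q Kic Hc i (a + b) v)
             else 0)) \<and>
       
       (Acart s N i j = 0 \<longrightarrow> (\<forall>a b.
          E i a (E j b v) - vsc ((-1) powi (deg s i * deg s j)) (E j b (E i a v)) = 0 \<and>
          F i a (F j b v) - vsc ((-1) powi (deg s i * deg s j)) (F j b (F i a v)) = 0)) \<and>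
       (Acart s N i j \<noteq> 0 \<longrightarrow> (\<forall>a b.
          vsc (d powi Mmat s N i j) (E i (a + 1) (E j b v)) - vsc (q powi Acart s N i j) (E i a (E j (b + 1) v))
            = vsc ((-1) powi (deg s i * deg s j))
                (vsc (d powi Mmat s N i j * q powi Acart s N i j) (E j b (E i (a + 1) v)) - E j (b + 1) (E i a v)) \<and>
          vsc (d powi Mmat s N i j) (F i (a + 1) (F j b v)) - vsc (q powi (- Acart s N i j)) (F i a (F j (b + 1) v))
            = vsc ((-1) powi (deg s i * deg s j))
                (vsc (d powi Mmat s N i j * q powi (- Acart s N i j)) (F j b (F i (a + 1) v)) - F j (b + 1) (F i a v)))))"
proof (intro ballI)
  fix i j v assume i: "i \<in> {0..<N}" and j: "j \<in> {0..<N}" and v: "v \<in> Wspace"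
  then have i': "0 \<le> i" "i < N" and j': "0 \<le> j" "j < N" by auto
  have kpc: "Kplus q Kc Hc = (\<lambda>i r. KpW s N d q u i r)" by (simp add: fun_eq_iff Kplus_eq)
  have kmc: "Kminus q Kic Hc = (\<lambda>i r. KmW s N d q u i r)" by (simp add: fun_eq_iff Kminus_eq)
  show "Kc i (Kc j v) = Kc j (Kc i v) \<and>
       (\<forall>r. Kc i (E j r (Kic i v)) = vsc (q powi Acart s N i j) (E j r v)) \<and>
       (\<forall>r. Kc i (F j r (Kic i v)) = vsc (q powi (- Acart s N i j)) (F j r v)) \<and>
       (\<forall>a b. Kplus q Kc Hc i a (Kplus q Kc Hc j b v) = Kplus q Kc Hc j b (Kplus q Kc Hc i a v) \<and> Kminus q Kic Hc i a (Kminus q Kic Hc j b v) = Kminus q Kic Hc j b (Kminus q Kic Hc i a v)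
              \<and> Kminus q Kic Hc i a (Kplus q Kc Hc j b v) = Kplus q Kc Hc j b (Kminus q Kic Hc i a v)) \<and>
       (\<forall>KZ\<in>{KZp q Kc Hc, KZm q Kic Hc}. \<forall>r k.
          vsc (d powi Mmat s N i j) (KZ i (r + 1) (E j k v)) - vsc (q powi Acart s N i j) (KZ i r (E j (k + 1) v))
            = vsc (d powi Mmat s N i j * q powi Acart s N i j) (E j k (KZ i (r + 1) v)) - E j (k + 1) (KZ i r v) \<and>
          vsc (d powi Mmat s N i j) (KZ i (r + 1) (F j k v)) - vsc (q powi (- Acart s N i j)) (KZ i r (F j (k + 1) v))
            = vsc (d powi Mmat s N i j * q powi (- Acart s N i j)) (F j k (KZ i (r + 1) v)) - F j (k + 1) (KZ i r v)) \<and>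
       (\<forall>a b. E i a (F j b v) - vsc ((-1) powi (deg s i * deg s j)) (F j b (E i a v))
          = (if i = j then vsc (1 / (q - inverse q)) (KZp q Kc Hc i (a + b) v - KZm q Kic Hc i (a + b) v)
             else 0)) \<and>
       (Acart s N i j = 0 \<longrightarrow> (\<forall>a b.
          E i a (E j b v) - vsc ((-1) powi (deg s i * deg s j)) (E j b (E i a v)) = 0 \<and>
          F i a (F j b v) - vsc ((-1) powi (deg s i * deg s j)) (F j b (F i a v)) = 0)) \<and>
       (Acart s N i j \<noteq> 0 \<longrightarrow> (\<forall>a b.
          vsc (d powi Mmat s N i j) (E i (a + 1) (E j b v)) - vsc (q powi Acart s N i j) (E i a (E j (b + 1) v))
            = vsc ((-1) powi (deg s i * deg s j))
                (vsc (d powi Mmat s N i j * q powi Acart s N i j) (E j b (E i (a + 1) v)) - E j (b + 1) (E i a v)) \<and>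
          vsc (d powi Mmat s N i j) (F i (a + 1) (F j b v)) - vsc (q powi (- Acart s N i j)) (F i a (F j (b + 1) v))
            = vsc ((-1) powi (deg s i * deg s j))
                (vsc (d powi Mmat s N i j * q powi (- Acart s N i j)) (F j b (F i (a + 1) v)) - F j (b + 1) (F i a v))))"
  proof (intro conjI allI impI ballI)
    show "Kc i (Kc j v) = Kc j (Kc i v)" by (simp add: Kc_def dg_def fun_eq_iff algebra_simps)
  next
    fix r show "Kc i (E j r (Kic i v)) = vsc (q powi Acart s N i j) (E j r v)" by (rule rel1E[OF i' j'])
  next
    fix r show "Kc i (F j r (Kic i v)) = vsc (q powi (- Acart s N i j)) (F j r v)" by (rule rel1F[OF i' j'])
  next
    fix a b
    show "Kplus q Kc Hc i a (Kplus q Kc Hc j b v) = Kplus q Kc Hc j b (Kplus q Kc Hc i a v)"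
      "Kminus q Kic Hc i a (Kminus q Kic Hc j b v) = Kminus q Kic Hc j b (Kminus q Kic Hc i a v)"
      "Kminus q Kic Hc i a (Kplus q Kc Hc j b v) = Kplus q Kc Hc j b (Kminus q Kic Hc i a v)"
      by (simp_all add: kpc kmc KpW_def KmW_def fun_eq_iff algebra_simps)
  next
    fix KZ r k assume KZ: "KZ \<in> {KZp q Kc Hc, KZm q Kic Hc}"
    show "vsc (d powi Mmat s N i j) (KZ i (r + 1) (E j k v)) - vsc (q powi Acart s N i j) (KZ i r (E j (k + 1) v))
            = vsc (d powi Mmat s N i j * q powi Acart s N i j) (E j k (KZ i (r + 1) v)) - E j (k + 1) (KZ i r v)"
      by (rule rel3E[OF i' j' KZ])
    show "vsc (d powi Mmat s N i j) (KZ i (r + 1) (F j k v)) - vsc (q powi (- Acart s N i j)) (KZ i r (F j (k + 1) v))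
            = vsc (d powi Mmat s N i j * q powi (- Acart s N i j)) (F j k (KZ i (r + 1) v)) - F j (k + 1) (KZ i r v)"
      by (rule rel3F[OF i' j' KZ])
  next
    fix a b show "E i a (F j b v) - vsc ((-1) powi (deg s i * deg s j)) (F j b (E i a v))
          = (if i = j then vsc (1 / (q - inverse q)) (KZp q Kc Hc i (a + b) v - KZm q Kic Hc i (a + b) v)
             else 0)" by (rule rel4[OF i' j'])
  next
    fix a b assume A: "Acart s N i j = 0"
    show "E i a (E j b v) - vsc ((-1) powi (deg s i * deg s j)) (E j b (E i a v)) = 0"
      "F i a (F j b v) - vsc ((-1) powi (deg s i * deg s j)) (F j b (F i a v)) = 0"
      using rel5_zero[OF i' j' A] by blast+
  next
    fix a b
    show "vsc (d powi Mmat s N i j) (E i (a + 1) (E j b v)) - vsc (q powi Acart s N i j) (E i a (E j (b + 1) v))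
            = vsc ((-1) powi (deg s i * deg s j))
                (vsc (d powi Mmat s N i j * q powi Acart s N i j) (E j b (E i (a + 1) v)) - E j (b + 1) (E i a v))"
      by (rule rel5E[OF i' j'])
    show "vsc (d powi Mmat s N i j) (F i (a + 1) (F j b v)) - vsc (q powi (- Acart s N i j)) (F i a (F j (b + 1) v))
            = vsc ((-1) powi (deg s i * deg s j))
                (vsc (d powi Mmat s N i j * q powi (- Acart s N i j)) (F j b (F i (a + 1) v)) - F j (b + 1) (F i a v))"
      by (rule rel5F[OF i' j'])
  qed
qed

lemma c1lem:
  assumes g: "g \<in> {(\<lambda>i r. (E i r, unitw N i, deg s i)), (\<lambda>i r. (F i r, - unitw N i, deg s i))}"
  shows "Acart s N i i \<noteq> 0 \<longrightarrow> (\<forall>e\<in>{1, -1}. \<forall>a1 a2 b.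
          fst (qbr s N q (g i a1) (qbr s N q (g i a2) (g ((i + e) mod N) b))) v
          + fst (qbr s N q (g i a2) (qbr s N q (g i a1) (g ((i + e) mod N) b))) v = 0)"
proof
  show "\<forall>e\<in>{1, -1}. \<forall>a1 a2 b.
          fst (qbr s N q (g i a1) (qbr s N q (g i a2) (g ((i + e) mod N) b))) v
          + fst (qbr s N q (g i a2) (qbr s N q (g i a1) (g ((i + e) mod N) b))) v = 0"
  proof (intro ballI allI)
    fix e a1 a2 b assume "e \<in> {1, -1::int}"
    then have e': "e = 1 \<or> e = -1" by simp
    from g show "fst (qbr s N q (g i a1) (qbr s N q (g i a2) (g ((i + e) mod N) b))) v
          + fst (qbr s N q (g i a2) (qbr s N q (g i a1) (g ((i + e) mod N) b))) v = 0"
      by (elim insertE emptyE) (simp_all only: serre1E[OF e'] serre1F[OF e'] add_0)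
  qed
qed

lemma c2lem:
  assumes g: "g \<in> {(\<lambda>i r. (E i r, unitw N i, deg s i)), (\<lambda>i r. (F i r, - unitw N i, deg s i))}"
  shows "m * n \<noteq> 2 \<and> Acart s N i i = 0 \<longrightarrow> (\<forall>a1 a2 b1 b2.
          fst (qbr s N q (g i a1) (qbr s N q (g ((i + 1) mod N) b1) (qbr s N q (g i a2) (g ((i - 1) mod N) b2)))) v
          + fst (qbr s N q (g i a2) (qbr s N q (g ((i + 1) mod N) b1) (qbr s N q (g i a1) (g ((i - 1) mod N) b2)))) v = 0)"
  using g serre2E serre2F serre2_N4 by auto

lemma c3lem:
  assumes g: "g \<in> {(\<lambda>i r. (E i r, unitw N i, deg s i)), (\<lambda>i r. (F i r, - unitw N i, deg s i))}"
  shows "m * n = 2 \<and> Acart s N i i \<noteq> 0 \<longrightarrow> (\<forall>a1 a2 b1 b2 c.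
          (let L = (\<lambda>a1 a2 b1 b2. fst (qbr s N q (g ((i - 1) mod N) a1) (qbr s N q (g ((i + 1) mod N) b1)
                      (qbr s N q (g ((i - 1) mod N) a2) (qbr s N q (g ((i + 1) mod N) b2) (g i c))))) v);
               R = (\<lambda>a1 a2 b1 b2. fst (qbr s N q (g ((i + 1) mod N) b1) (qbr s N q (g ((i - 1) mod N) a1)
                      (qbr s N q (g ((i + 1) mod N) b2) (qbr s N q (g ((i - 1) mod N) a2) (g i c))))) v)
           in L a1 a2 b1 b2 + L a2 a1 b1 b2 + L a1 a2 b2 b1 + L a2 a1 b2 b1
              = R a1 a2 b1 b2 + R a2 a1 b1 b2 + R a1 a2 b2 b1 + R a2 a1 b2 b1))"
proof (intro impI allI)
  assume "m * n = 2 \<and> Acart s N i i \<noteq> 0"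
  then have N3': "N = 3" using mn2_N3 by blast
  fix a1 a2 b1 b2 c
  show "(let L = (\<lambda>a1 a2 b1 b2. fst (qbr s N q (g ((i - 1) mod N) a1) (qbr s N q (g ((i + 1) mod N) b1)
                    (qbr s N q (g ((i - 1) mod N) a2) (qbr s N q (g ((i + 1) mod N) b2) (g i c))))) v);
             R = (\<lambda>a1 a2 b1 b2. fst (qbr s N q (g ((i + 1) mod N) b1) (qbr s N q (g ((i - 1) mod N) a1)
                    (qbr s N q (g ((i + 1) mod N) b2) (qbr s N q (g ((i - 1) mod N) a2) (g i c))))) v)
         in L a1 a2 b1 b2 + L a2 a1 b1 b2 + L a1 a2 b2 b1 + L a2 a1 b2 b1
            = R a1 a2 b1 b2 + R a2 a1 b1 b2 + R a1 a2 b2 b1 + R a2 a1 b2 b1)"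
    using g serre3E[OF N3'] serre3F[OF N3'] by (auto simp only: Let_def insert_iff empty_iff)
qed

lemma conj6: "(\<forall>g\<in>{(\<lambda>i r. (E i r, unitw N i, deg s i)), (\<lambda>i r. (F i r, - unitw N i, deg s i))}. \<forall>i\<in>{0..<N}. \<forall>v\<in>Wspace.
       (Acart s N i i \<noteq> 0 \<longrightarrow> (\<forall>e\<in>{1, -1}. \<forall>a1 a2 b.
          fst (qbr s N q (g i a1) (qbr s N q (g i a2) (g ((i + e) mod N) b))) v
          + fst (qbr s N q (g i a2) (qbr s N q (g i a1) (g ((i + e) mod N) b))) v = 0)) \<and>
       (m * n \<noteq> 2 \<and> Acart s N i i = 0 \<longrightarrow> (\<forall>a1 a2 b1 b2.
          fst (qbr s N q (g i a1) (qbr s N q (g ((i + 1) mod N) b1) (qbr s N q (g i a2) (g ((i - 1) mod N) b2)))) v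
          + fst (qbr s N q (g i a2) (qbr s N q (g ((i + 1) mod N) b1) (qbr s N q (g i a1) (g ((i - 1) mod N) b2)))) v = 0)) \<and>
       (m * n = 2 \<and> Acart s N i i \<noteq> 0 \<longrightarrow> (\<forall>a1 a2 b1 b2 c.
          (let L = (\<lambda>a1 a2 b1 b2. fst (qbr s N q (g ((i - 1) mod N) a1) (qbr s N q (g ((i + 1) mod N) b1)
                      (qbr s N q (g ((i - 1) mod N) a2) (qbr s N q (g ((i + 1) mod N) b2) (g i c))))) v);
               R = (\<lambda>a1 a2 b1 b2. fst (qbr s N q (g ((i + 1) mod N) b1) (qbr s N q (g ((i - 1) mod N) a1)
                      (qbr s N q (g ((i + 1) mod N) b2) (qbr s N q (g ((i - 1) mod N) a2) (g i c))))) v)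
           in L a1 a2 b1 b2 + L a2 a1 b1 b2 + L a1 a2 b2 b1 + L a2 a1 b2 b1
              = R a1 a2 b1 b2 + R a2 a1 b1 b2 + R a1 a2 b2 b1 + R a2 a1 b2 b1))))"
  apply (intro ballI conjI)
    apply (erule c1lem)
   apply (erule c2lem)
  apply (erule c3lem)
  done

lemma kmkp0: "km i 0 x * kp i 0 x = 1" using kpkm0[of i x] by (simp add: mult.commute)

lemma Es: "Es_module m n s d q (Eop s N d q u) (Fop s N d q u) Kc Kic Hc"
  unfolding Es_module_def Let_def Ndef[symmetric]
  apply (intro conjI)
  subgoal by (auto simp: lin_E lin_F par_E par_F)
  subgoal by (simp add: Kc_def Kic_def lin_dg par_dg)
  subgoal by (simp add: Hc_def lin_dg par_dg)
  subgoal using kpkm0 kmkp0 by (simp add: Kc_def Kic_def dg_def fun_eq_iff mult.assoc[symmetric])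
  subgoal by (rule conj5)
  subgoal by (rule conj6[unfolded Let_def])
  done

end

context WU
begin

lemma foldr_K: "foldr (\<lambda>i T. Kc i \<circ> T) xs id v = (\<lambda>j. (\<Prod>i\<leftarrow>xs. kp i 0 j) * v j)"
  by (induction xs) (auto simp: Kc_def dg_def fun_eq_iff)

lemma prod_kp: "(\<Prod>i\<leftarrow>[0..N - 1]. kp i 0 j) = 1"
proof -
  let ?a = "j mod N" and ?b = "(j - 1) mod N"
  have ab: "?a \<noteq> ?b" using N3 by (simp add: mdsimps)
  have "(\<Prod>i\<leftarrow>[0..N - 1]. kp i 0 j) = (\<Prod>i\<in>{0..N - 1}. kp i 0 j)"
    by (subst prod.distinct_set_conv_list[symmetric]) auto
  also have "\<dots> = (\<Prod>i\<in>{0..N - 1}. (if i = ?a then q powi (- s j) else 1) * (if i = ?b then q powi (s j) else 1))"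
  proof (rule prod.cong[OF refl])
    fix i assume "i \<in> {0..N - 1}"
    then have im: "i mod N = i" by simp
    show "kp i 0 j = (if i = ?a then q powi (- s j) else 1) * (if i = ?b then q powi (s j) else 1)"
      using ab by (auto simp: kp0 im)
  qed
  also have "\<dots> = q powi (- s j) * q powi (s j)"
    using Npos by (simp add: prod.distrib)
  also have "\<dots> = 1" using q0 by (simp add: power_int_minus)
  finally show ?thesis .
qed

lemma level0: "level_zero N Kc"
  unfolding level_zero_def foldr_K by (simp add: prod_kp)

lemma sum_period: "(\<Sum>k\<in>{0..<N}. s k) = int m - int n"
proof -
  let ?A = "{0..<N}"
  have "(\<Sum>k\<in>?A. s k) = (\<Sum>k\<in>?A. 2 * (if s k = 1 then 1 else 0) - 1)"
    by (rule sum.cong[OF refl]) (use s_pm in auto)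
  also have "\<dots> = 2 * (\<Sum>k\<in>?A. (if s k = 1 then 1 else 0)) - N"
    using Npos by (simp add: sum_subtractf sum_distrib_left)
  also have "(\<Sum>k\<in>?A. (if s k = 1 then 1 else 0)) = int (card {k \<in> ?A. s k = 1})"
    by (simp add: sum.If_cases[of ?A] Int_def)
  also have "\<dots> = int m" using card_S by simp
  finally show ?thesis using Ndef by simp
qed

lemma sbar_N: "sbar s N = int m - int n"
proof -
  have "sbar s N = (\<Sum>k\<in>{1..N}. s k)" using Npos by (simp add: sbar_def)
  also have "{1..N} = insert N {1..<N}" using Npos by auto
  also have "{0..<N} = insert 0 {1..<N}" using Npos by auto
  then have "(\<Sum>k\<in>{0..<N}. s k) = s 0 + (\<Sum>k\<in>{1..<N}. s k)" by simp
  moreover have "s N = s 0" using s_perN[of 0] by simp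
  ultimately show ?thesis using sum_period by simp
qed

lemma sbar_shift: "sbar s (j + N) = sbar s j + (int m - int n)"
proof -
  define D where "D j = sbar s (j + N) - sbar s j" for j
  have step: "D (j + 1) = D j" for j
  proof -
    have "sbar s (j + 1 + N) = sbar s (j + N + 1)" by (simp add: ac_simps)
    then show ?thesis unfolding D_def using sbar_step[of s "j + N"] sbar_step[of s j] s_perN[of "j + 1"]
      by (simp add: ac_simps)
  qed
  have "D j = D 0"
  proof (induction j rule: int_induct[where k = 0])
    case base then show ?case by simp
  next
    case (step1 i) then show ?case using step by simp
  next
    case (step2 i) then show ?case using step[of "i - 1"] by simp
  qed
  moreover have "D 0 = int m - int n" unfolding D_def using sbar_N by (simp add: sbar_def)
  ultimately show ?thesis unfolding D_def by simp
qed

lemma sbar_shift_t: "sbar s (j + N * t) = sbar s j + t * (int m - int n)"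
proof (induction t rule: int_induct[where k = 0])
  case base then show ?case by simp
next
  case (step1 i)
  have e: "j + N * (i + 1) = (j + N * i) + N" by (simp add: algebra_simps)
  show ?case unfolding e sbar_shift step1(2) by (simp add: algebra_simps)
next
  case (step2 i)
  have e: "j + N * i = (j + N * (i - 1)) + N" by (simp add: algebra_simps)
  have "sbar s (j + N * i) = sbar s (j + N * (i - 1)) + (int m - int n)" unfolding e by (rule sbar_shift)
  then show ?case unfolding step2(2) by (simp add: algebra_simps)
qed

lemma av_inj: assumes c: "k mod N = j mod N" and e: "av k = av j" shows "k = j"
proof -
  have "N dvd (k - j)" using c by (simp add: mod_eq_dvd_iff)
  then obtain t where kt: "k = j + N * t" by (metis add_diff_cancel_left' diff_add_cancel dvdE)
  have "av k = inverse (d * q) powi (t * (int m - int n)) * av j"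
    unfolding kt aval_def by (simp add: sbar_shift_t power_int_add d0 q0)
  then have "inverse (d * q) powi (t * (int m - int n)) = 1" using e av_nz[of j] by simp
  then have "t * (int m - int n) = 0" by (rule q3pow)
  then have "t = 0" using mn by simp
  then show ?thesis using kt by simp
qed

lemma qpow1_ne: "q powi (s j) \<noteq> 1" "q powi (- s j) \<noteq> 1"
  using s_pm[of j] q_ne1 q0 by (auto simp: power_int_minus)

lemma kp_sep: assumes h: "\<forall>i\<in>{0..<N}. \<forall>r. kp i r k = kp i r j" shows "k = j"
proof -
  let ?i0 = "j mod N" and ?i1 = "(j - 1) mod N"
  have i0: "?i0 \<in> {0..<N}" and i1: "?i1 \<in> {0..<N}" using Npos by auto
  have n01: "(j - 1) mod N \<noteq> j mod N" using N3 by (simp add: mdsimps)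
  show ?thesis
  proof (cases "k mod N = j mod N")
    case True
    have sk: "s k = s j" using True by (rule s_cong)
    have "kp ?i0 1 k = kp ?i0 1 j" using h i0 by blast
    then have "(q powi (- s j) - q powi (s j)) * av k = (q powi (- s j) - q powi (s j)) * av j"
      using True sk by (simp add: kp_eig_def psi_inf_eq)
    moreover have "q powi (- s j) - q powi (s j) \<noteq> 0" using qpow_s_ne[of j] by simp
    ultimately have "av k = av j" by simp
    then show ?thesis using av_inj True by blast
  next
    case False
    have e0: "kp ?i0 0 k = kp ?i0 0 j" using h i0 by blast
    show ?thesis
    proof (cases "(k - 1) mod N = j mod N")
      case True
      have "kp ?i1 0 k = kp ?i1 0 j" using h i1 by blast
      moreover have "k mod N \<noteq> (j - 1) mod N"
      proof
        assume "k mod N = (j - 1) mod N"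
        moreover have "(k - 1 + 1) mod N = (j + 1) mod N" using True by (metis mod_add_left_eq)
        ultimately have "(j - 1) mod N = (j + 1) mod N" by simp
        then show False using N3 by (simp add: mdsimps)
      qed
      moreover have "(k - 1) mod N \<noteq> (j - 1) mod N"
      proof
        assume "(k - 1) mod N = (j - 1) mod N"
        then have "(k - 1 + 1) mod N = (j - 1 + 1) mod N" by (metis mod_add_left_eq)
        then show False using False by simp
      qed
      ultimately have "1 = q powi (s j)" using n01 by (simp add: kp0)
      then show ?thesis using qpow1_ne by simp
    next
      case F2: False
      have "1 = q powi (- s j)" using e0 False F2 by (simp add: kp0)
      then show ?thesis using qpow1_ne by simp
    qed
  qed
qed

end

context WU
begin

lemma module_vsc: "module vsc"
  by unfold_locales (auto simp: vsc_def fun_eq_iff algebra_simps)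

lemma sum_fun_apply: "(sum f S :: int \<Rightarrow> complex) x = (\<Sum>k\<in>S. f k x)"
proof (cases "finite S")
  case True then show ?thesis by (induction S rule: finite_induct) auto
next
  case False then show ?thesis by simp
qed

abbreviation supp :: "wvec \<Rightarrow> int set" where "supp v \<equiv> {j. v j \<noteq> 0}"

lemma basis_W: "basisv j \<in> Wspace"
proof -
  have "supp (basisv j) = {j}" by (auto simp: basisv_def)
  then show ?thesis by (simp add: Wspace_def)
qed

lemma basis_nz: "basisv j \<noteq> 0"
  by (auto simp: basisv_def fun_eq_iff)

lemma expand: "v \<in> Wspace \<Longrightarrow> v = (\<Sum>k\<in>supp v. vsc (v k) (basisv k))"
proof (rule ext)
  fix x assume v: "v \<in> Wspace"
  then have fin: "finite (supp v)" by (simp add: Wspace_def)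
  have "(\<Sum>k\<in>supp v. vsc (v k) (basisv k)) x = (\<Sum>k\<in>supp v. if k = x then v k else 0)"
    by (simp add: sum_fun_apply vsc_def basisv_def) (rule sum.cong; auto)
  also have "\<dots> = v x" using fin by (simp add: sum.delta)
  finally show "v x = (\<Sum>k\<in>supp v. vsc (v k) (basisv k)) x" by simp
qed

lemma W_sum: "finite S \<Longrightarrow> (\<And>k. k \<in> S \<Longrightarrow> f k \<in> Wspace) \<Longrightarrow> sum f S \<in> Wspace"
proof (induction S rule: finite_induct)
  case empty then show ?case by (simp add: Wspace_def)
next
  case (insert x F)
  have "finite (supp (f x + sum f F))"
  proof (rule finite_subset[of _ "supp (f x) \<union> supp (sum f F)"])
    show "supp (f x + sum f F) \<subseteq> supp (f x) \<union> supp (sum f F)" by auto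
    show "finite (supp (f x) \<union> supp (sum f F))" using insert by (simp add: Wspace_def)
  qed
  then show ?case using insert by (simp add: Wspace_def)
qed

lemma W_vsc: "v \<in> Wspace \<Longrightarrow> vsc c v \<in> Wspace"
  unfolding Wspace_def by (auto simp: vsc_def elim!: rev_finite_subset)

lemma W_add: "v \<in> Wspace \<Longrightarrow> w \<in> Wspace \<Longrightarrow> v + w \<in> Wspace"
  using W_sum[of "{0::nat, 1}" "\<lambda>k. if k = 0 then v else w"] by simp

lemma subspace_W: "module.subspace vsc Wspace"
  unfolding module.subspace_def[OF module_vsc]
  using W_add W_vsc by (auto simp: Wspace_def)

lemma span_basis: "module.span vsc (range basisv) = Wspace"
proof
  show "module.span vsc (range basisv) \<subseteq> Wspace"
    by (rule module.span_minimal[OF module_vsc]) (use basis_W subspace_W in auto)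
  show "Wspace \<subseteq> module.span vsc (range basisv)"
  proof
    fix v assume v: "v \<in> Wspace"
    have "(\<Sum>k\<in>supp v. vsc (v k) (basisv k)) \<in> module.span vsc (range basisv)"
      by (rule module.span_sum[OF module_vsc], rule module.span_scale[OF module_vsc],
          rule module.span_base[OF module_vsc]) auto
    then show "v \<in> module.span vsc (range basisv)" using expand[OF v] by simp
  qed
qed

lemma basis_inj: "basisv k = basisv j \<Longrightarrow> k = j"
  by (metis basisv_def zero_neq_one)

lemma indep_basis: "\<not> module.dependent vsc (range basisv)"
proof
  assume "module.dependent vsc (range basisv)"
  then obtain t u where t: "finite t" "t \<subseteq> range basisv" "(\<Sum>v\<in>t. vsc (u v) v) = 0"
      and ex: "\<exists>v\<in>t. u v \<noteq> 0"
    unfolding module.dependent_explicit[OF module_vsc] by blast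
  then obtain v where v: "v \<in> t" "u v \<noteq> 0" by blast
  obtain j where vj: "v = basisv j" using t(2) v(1) by blast
  have "(\<Sum>w\<in>t. vsc (u w) w) j = (\<Sum>w\<in>t. if w = v then u w else 0)"
  proof -
    have "(\<Sum>w\<in>t. vsc (u w) w) j = (\<Sum>w\<in>t. u w * w j)" by (simp add: sum_fun_apply vsc_def)
    also have "\<dots> = (\<Sum>w\<in>t. if w = v then u w else 0)"
    proof (rule sum.cong[OF refl])
      fix w assume "w \<in> t"
      then obtain k where wk: "w = basisv k" using t(2) by blast
      show "u w * w j = (if w = v then u w else 0)"
        using basis_inj[of k j] unfolding wk vj by (auto simp: basisv_def)
    qed
    finally show ?thesis .
  qed
  also have "\<dots> = u v" using t(1) v(1) by (simp add: sum.delta')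
  finally show False using t(3) v(2) by simp
qed

lemma Kp_fun: "Kplus q Kc Hc = (\<lambda>i r. KpW s N d q u i r)" by (simp add: fun_eq_iff Kplus_eq)
lemma Km_fun: "Kminus q Kic Hc = (\<lambda>i r. KmW s N d q u i r)" by (simp add: fun_eq_iff Kminus_eq)

lemma eigp: "KpW s N d q u i r (basisv j) = vsc (kp i r j) (basisv j)"
  by (auto simp: KpW_def vsc_def basisv_def fun_eq_iff)
lemma eigm: "KmW s N d q u i r (basisv j) = vsc (km i r j) (basisv j)"
  by (auto simp: KmW_def vsc_def basisv_def fun_eq_iff)

lemma tame: "tame_module N (Kplus q Kc Hc) (Kminus q Kic Hc)"
  unfolding tame_module_def Kp_fun Km_fun
proof (intro conjI)
  show "\<exists>B. B \<subseteq> Wspace \<and> \<not> module.dependent vsc B \<and> module.span vsc B = Wspace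
        \<and> (\<forall>b\<in>B. b \<noteq> 0 \<and> (\<forall>i\<in>{0..<N}. \<forall>r. (\<exists>c. KpW s N d q u i r b = vsc c b) \<and> (\<exists>c. KmW s N d q u i r b = vsc c b)))"
  proof (intro exI[of _ "range basisv"] conjI ballI allI)
    show "range basisv \<subseteq> Wspace" using basis_W by auto
    show "\<not> module.dependent vsc (range basisv)" by (rule indep_basis)
    show "module.span vsc (range basisv) = Wspace" by (rule span_basis)
  next
    fix b assume "b \<in> range basisv"
    then obtain j where bj: "b = basisv j" by blast
    show "b \<noteq> 0" unfolding bj by (rule basis_nz)
    fix i r
    show "\<exists>c. KpW s N d q u i r b = vsc c b" unfolding bj eigp by blast
    show "\<exists>c. KmW s N d q u i r b = vsc c b" unfolding bj eigm by blast
  qed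
  show "\<forall>lp lm. \<forall>v\<in>Wspace. \<forall>w\<in>Wspace.
        (\<forall>i\<in>{0..<N}. \<forall>r. KpW s N d q u i r v = vsc (lp i r) v \<and> KmW s N d q u i r v = vsc (lm i r) v
                       \<and> KpW s N d q u i r w = vsc (lp i r) w \<and> KmW s N d q u i r w = vsc (lm i r) w) \<and> v \<noteq> 0
        \<longrightarrow> (\<exists>c. w = vsc c v)"
  proof (intro allI ballI impI)
    fix lp lm v w
    assume H: "(\<forall>i\<in>{0..<N}. \<forall>r. KpW s N d q u i r v = vsc (lp i r) v \<and> KmW s N d q u i r v = vsc (lm i r) v
                       \<and> KpW s N d q u i r w = vsc (lp i r) w \<and> KmW s N d q u i r w = vsc (lm i r) w) \<and> v \<noteq> 0"
    then obtain j where vj: "v j \<noteq> 0" by (auto simp: fun_eq_iff)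
    have ev: "kp i r x * v x = lp i r * v x" "kp i r x * w x = lp i r * w x" if "i \<in> {0..<N}" for i r x
    proof -
      have "KpW s N d q u i r v x = vsc (lp i r) v x" "KpW s N d q u i r w x = vsc (lp i r) w x"
        using H that by auto
      then show "kp i r x * v x = lp i r * v x" "kp i r x * w x = lp i r * w x"
        by (simp_all add: KpW_def vsc_def)
    qed
    have lpj: "lp i r = kp i r j" if "i \<in> {0..<N}" for i r
      using ev(1)[OF that, of r j] vj by simp
    have onlyj: "x = j" if "v x \<noteq> 0 \<or> w x \<noteq> 0" for x
    proof (rule kp_sep, intro ballI allI)
      fix i r assume i: "i \<in> {0..<N}"
      from that show "kp i r x = kp i r j"
        using ev[OF i, of r x] lpj[OF i, of r] by auto
    qed
    show "\<exists>c. w = vsc c v"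
    proof (intro exI[of _ "w j / v j"] ext)
      fix x
      show "w x = vsc (w j / v j) v x"
      proof (cases "x = j")
        case True then show ?thesis using vj by (simp add: vsc_def)
      next
        case False
        then have "v x = 0" "w x = 0" using onlyj by auto
        then show ?thesis by (simp add: vsc_def)
      qed
    qed
  qed
qed

lemma FE_pt: "F i 0 (E i r w) x = (if x mod N = i mod N then of_int (s (x + 1)) * av x powi r * w x else 0)"
  by (simp add: Eop_def Fop_def)

lemma E_basis: "E (j mod N) 0 (basisv j) = basisv (j + 1)"
  by (auto simp: Eop_def basisv_def fun_eq_iff)

lemma F_basis: "F ((j - 1) mod N) 0 (basisv j) = vsc (of_int (s j)) (basisv (j - 1))"
  by (auto simp: Fop_def basisv_def vsc_def fun_eq_iff)

lemma U_sum:
  assumes "0 \<in> U" "\<forall>v\<in>U. \<forall>w\<in>U. v + w \<in> U"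
  shows "finite S \<Longrightarrow> (\<And>k. k \<in> S \<Longrightarrow> f k \<in> U) \<Longrightarrow> sum f S \<in> U"
proof (induction S rule: finite_induct)
  case empty then show ?case using assms by simp
next
  case (insert x F) then show ?case using assms by simp
qed

lemma irr_core:
  assumes UW: "U \<subseteq> Wspace" and U0: "0 \<in> U" and Uadd: "\<forall>v\<in>U. \<forall>w\<in>U. v + w \<in> U"
    and Usc: "\<forall>c. \<forall>v\<in>U. vsc c v \<in> U"
    and UEF: "\<forall>i\<in>{0..<N}. \<forall>v\<in>U. \<forall>r. E i r v \<in> U \<and> F i r v \<in> U"
    and v: "v \<in> U" "v \<noteq> 0"
  shows "Wspace \<subseteq> U"
proof -
  have EF: "E (i mod N) r w \<in> U" "F (i mod N) r w \<in> U" if "w \<in> U" for i r w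
    using UEF that Npos by auto
  have stepA: "\<And>v. v \<in> U \<Longrightarrow> v \<noteq> 0 \<Longrightarrow> card (supp v) = n \<Longrightarrow> \<exists>j. basisv j \<in> U" for n
  proof (induction n rule: less_induct)
    case (less n)
    fix v assume vU: "v \<in> U" and vnz: "v \<noteq> 0" and cn: "card (supp v) = n"
    have fin: "finite (supp v)" using vU UW by (auto simp: Wspace_def)
    obtain j where j: "v j \<noteq> 0" using vnz by (auto simp: fun_eq_iff)
    show "\<exists>j. basisv j \<in> U"
    proof (cases "supp v = {j}")
      case True
      have "basisv j = vsc (1 / v j) v"
      proof (rule ext)
        fix x show "basisv j x = vsc (1 / v j) v x"
          using True j by (cases "x = j") (auto simp: vsc_def basisv_def)
      qed
      moreover have "vsc (1 / v j) v \<in> U" using Usc vU by blast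
      ultimately show ?thesis by metis
    next
      case False
      then obtain k where k: "v k \<noteq> 0" "k \<noteq> j" using j by blast
      define i where "i = j mod N"
      define r :: int where "r = (if k mod N = j mod N then 1 else 0)"
      define \<delta> where "\<delta> x = (if x mod N = i mod N then of_int (s (x + 1)) * av x powi r else 0)" for x
      define v' where "v' = F i 0 (E i r v) + vsc (- \<delta> k) v"
      have a1: "F i 0 (E i r v) \<in> U" unfolding i_def by (rule EF(2)[OF EF(1)[OF vU]])
      have a2: "vsc (- \<delta> k) v \<in> U" using Usc vU by blast
      have v'U: "v' \<in> U" unfolding v'_def using Uadd a1 a2 by blast
      have v'x: "v' x = (\<delta> x - \<delta> k) * v x" for x
        by (simp add: v'_def FE_pt \<delta>_def vsc_def algebra_simps)
      have dne: "\<delta> j \<noteq> \<delta> k"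
      proof (cases "k mod N = j mod N")
        case True
        have "s (k + 1) = s (j + 1)" using True by (metis s_cong mod_add_left_eq)
        moreover have "av k \<noteq> av j" using av_inj True k(2) by blast
        moreover have "s (j + 1) \<noteq> 0" using s_pm[of "j + 1"] by auto
        ultimately show ?thesis using True by (simp add: \<delta>_def i_def r_def)
      next
        case False
        then show ?thesis using s_pm[of "j + 1"] by (auto simp: \<delta>_def i_def r_def)
      qed
      have sub: "supp v' \<subset> supp v"
      proof
        show "supp v' \<subseteq> supp v" by (auto simp: v'x)
        show "supp v' \<noteq> supp v" using k by (auto simp: v'x)
      qed
      have "card (supp v') < n" using psubset_card_mono[OF fin sub] cn by simp
      moreover have "v' \<noteq> 0" using j dne by (auto simp: fun_eq_iff v'x intro!: exI[of _ j])
      ultimately show ?thesis by (rule less.IH[OF _ v'U _ refl])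
    qed
  qed
  obtain j where j: "basisv j \<in> U" using stepA[OF v refl] by blast
  have stepB: "basisv (j + t) \<in> U" for t
  proof (induction t rule: int_induct[where k = 0])
    case base then show ?case using j by simp
  next
    case (step1 t)
    have "E ((j + t) mod N) 0 (basisv (j + t)) \<in> U" using EF step1(2) by blast
    then show ?case by (simp add: E_basis add.assoc)
  next
    case (step2 t)
    have "F ((j + t - 1) mod N) 0 (basisv (j + t)) \<in> U" using EF step2(2) by blast
    then have "vsc (of_int (s (j + t))) (vsc (of_int (s (j + t))) (basisv (j + t - 1))) \<in> U"
      using Usc by (simp add: F_basis)
    then have A: "vsc (of_int (s (j + t)) * of_int (s (j + t))) (basisv (j + t - 1)) \<in> U"
      by (simp only: vsc_vsc)
    have sq: "of_int (s (j + t)) * of_int (s (j + t)) = (1::complex)"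
      using s_sq[of "j + t"] by (metis of_int_1 of_int_mult)
    have one: "vsc 1 w = w" for w by (simp add: vsc_def)
    have e: "j + (t - 1) = j + t - 1" by simp
    show ?case using A unfolding sq one e .
  qed
  have allb: "basisv k \<in> U" for k using stepB[of "k - j"] by simp
  show "Wspace \<subseteq> U"
  proof
    fix w assume w: "w \<in> Wspace"
    have fin: "finite (supp w)" using w by (simp add: Wspace_def)
    have "(\<Sum>k\<in>supp w. vsc (w k) (basisv k)) \<in> U"
      by (rule U_sum[OF U0 Uadd fin]) (use Usc allb in blast)
    then show "w \<in> U" using expand[OF w] by simp
  qed
qed

lemma irreducible: "irreducible_module N E F Kc Kic Hc"
  unfolding irreducible_module_def
proof (intro conjI allI impI)
  show "Wspace \<noteq> {0}" using basis_W[of 0] basis_nz[of 0] by blast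
  fix U
  assume h: "U \<subseteq> Wspace \<and> 0 \<in> U \<and> (\<forall>v\<in>U. \<forall>w\<in>U. v + w \<in> U) \<and> (\<forall>c. \<forall>v\<in>U. vsc c v \<in> U)
        \<and> (\<forall>i\<in>{0..<N}. \<forall>v\<in>U. Kc i v \<in> U \<and> Kic i v \<in> U
              \<and> (\<forall>r. E i r v \<in> U \<and> F i r v \<in> U) \<and> (\<forall>r. r \<noteq> 0 \<longrightarrow> Hc i r v \<in> U))"
  show "U = {0} \<or> U = Wspace"
  proof (cases "U = {0}")
    case False
    then obtain v where "v \<in> U" "v \<noteq> 0" using h by blast
    moreover have "\<forall>i\<in>{0..<N}. \<forall>v\<in>U. \<forall>r. E i r v \<in> U \<and> F i r v \<in> U" using h by blast
    ultimately have "Wspace \<subseteq> U" using h by (intro irr_core[of U v]) simp_all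
    then show ?thesis using h by blast
  qed simp
qed

end


theorem lemma3p2:
  fixes m n :: nat and s :: "int \<Rightarrow> int" and d q u :: complex
  assumes "parity_seq m n s"
    and "d \<noteq> 0" and "q \<noteq> 0"
    and "\<forall>a b c :: int. (d / q) powi a * (q ^ 2) powi b * (inverse (d * q)) powi c = 1
            \<longrightarrow> a = b \<and> b = c"
    and "u \<noteq> 0"
  shows "\<exists>K Kinv H.
     (\<forall>i\<in>{0..<int (m + n)}. \<forall>r. \<forall>v\<in>Wspace.
        Kplus q K H i r v = KpW s (int (m + n)) d q u i r v
      \<and> Kminus q Kinv H i r v = KmW s (int (m + n)) d q u i r v)
   \<and> Es_module m n s d q (Eop s (int (m + n)) d q u) (Fop s (int (m + n)) d q u) K Kinv H
   \<and> irreducible_module (int (m + n)) (Eop s (int (m + n)) d q u) (Fop s (int (m + n)) d q u) K Kinv H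
   \<and> tame_module (int (m + n)) (Kplus q K H) (Kminus q Kinv H)
   \<and> level_zero (int (m + n)) K"
proof -
  interpret W: WU m n s d q u "int (m + n)" using assms by unfold_locales auto
  show ?thesis
  proof (rule exI[where x = W.Kc], rule exI[where x = W.Kic], rule exI[where x = W.Hc], intro conjI)
    show "\<forall>i\<in>{0..<int (m + n)}. \<forall>r. \<forall>v\<in>Wspace.
        Kplus q W.Kc W.Hc i r v = KpW s (int (m + n)) d q u i r v
      \<and> Kminus q W.Kic W.Hc i r v = KmW s (int (m + n)) d q u i r v"
      using W.Kplus_eq W.Kminus_eq by simp
    show "Es_module m n s d q (Eop s (int (m + n)) d q u) (Fop s (int (m + n)) d q u) W.Kc W.Kic W.Hc"
      by (rule W.Es)
    show "irreducible_module (int (m + n)) (Eop s (int (m + n)) d q u) (Fop s (int (m + n)) d q u) W.Kc W.Kic W.Hc"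
      by (rule W.irreducible)
    show "tame_module (int (m + n)) (Kplus q W.Kc W.Hc) (Kminus q W.Kic W.Hc)"
      by (rule W.tame)
    show "level_zero (int (m + n)) W.Kc"
      by (rule W.level0)
  qed
qed

end
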